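(* Let $X_r$ be a Dynkin diagram of finite type with dual Coxeter number $h^\vee$ and involution $\omega$. (i) In the abelian group $\mathcal{T}_0(X_r)$: $T^{(a)}(u+h^\vee)=T^{(\omega(a))}(u)^{-1}$ and $T^{(a)}(u+2h^\vee)=T^{(a)}(u)$ for all $a\in I$, $u\in\frac1t\mathbb{Z}$. (ii) In the abelian group $\mathcal{Y}_0(X_r)$: $Y^{(a)}(u+h^\vee)=Y^{(\omega(a))}(u)^{-1}$ and $Y^{(a)}(u+2h^\vee)=Y^{(a)}(u)$ for all $a\in I$, $u\in\frac1t\mathbb{Z}$.
   Context: Enumeration of $I=\{1,\dots,r\}$: $A_r$: chain; $B_r$: chain with double bond between $r-1,r$, $\alpha_r$ short; $C_r$: same, $\alpha_r$ long, others short; $D_r$: chain $1-\cdots-(r-2)$, $r-1,r$ joined to $r-2$; $E_6$: chain $1-2-3-5-6$, $4$ joined to $3$; $E_7$: chain $1-\cdots-6$, $7$ joined to $3$; $E_8$: chain $1-\cdots-7$, $8$ joined to $5$; $F_4$: chain $1-2-3-4$, double bond between $2,3$, $\alpha_1,\alpha_2$ long; $G_2$: $\alpha_1$ long. $C$ is the Cartan matrix; $t=1$ (simply laced), $2$ ($B_r,C_r,F_4$), $3$ ($G_2$). $h^\vee$: $A_r$: $r+1$, $B_r$: $2r-1$, $C_r$: $r+1$, $D_r$: $2r-2$, $E_6$: 12, $E_7$: 18, $E_8$: 30, $F_4$: 9, $G_2$: 4. $\omega$ is the identity except: $\omega(a)=r+1-a$ for $A_r$; $\omega$ swaps $r-1,r$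 for $D_r$ with $r$ odd; $\omega$ swaps $1\leftrightarrow6$, $2\leftrightarrow5$ for $E_6$. $\mathcal{T}_0(X_r)$ is the abelian group (written multiplicatively) generated by $T^{(a)}(u)$ ($a\in I$, $u\in\frac1t\mathbb{Z}$) with relations (with $T^{(0)}(u)=1$): simply laced: $T^{(a)}(u-1)T^{(a)}(u+1)=\prod_{b:C_{ab}=-1}T^{(b)}(u)$; $B_r$: $T^{(a)}(u-1)T^{(a)}(u+1)=T^{(a-1)}(u)T^{(a+1)}(u)$ ($a\le r-2$), $T^{(r-1)}(u-1)T^{(r-1)}(u+1)=T^{(r-2)}(u)T^{(r)}(u)$, $T^{(r)}(u-\frac12)T^{(r)}(u+\frac12)=T^{(r-1)}(u-\frac12)T^{(r-1)}(u+\frac12)$; $C_r$: $T^{(a)}(u-\frac12)T^{(a)}(u+\frac12)=T^{(a-1)}(u)T^{(a+1)}(u)$ ($a\le r-2$), $T^{(r-1)}(u-\frac12)T^{(r-1)}(u+\frac12)=T^{(r-2)}(u)T^{(r)}(u-\frac12)T^{(r)}(u+\frac12)$, $T^{(r)}(u-1)T^{(r)}(u+1)=T^{(r-1)}(u)$; $F_4$: $T^{(1)}(u-1)T^{(1)}(u+1)=T^{(2)}(u)$, $T^{(2)}(u-1)T^{(2)}(u+1)=T^{(1)}(u)T^{(3)}(u)$, $T^{(3)}(u-\frac12)T^{(3)}(u+\frac12)=T^{(2)}(u-\frac12)T^{(2)}(u+\frac12)T^{(4)}(u)$, $T^{(4)}(u-\frac12)T^{(4)}(u+\frac12)=T^{(3)}(u)$;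 $G_2$: $T^{(1)}(u-1)T^{(1)}(u+1)=T^{(2)}(u)$, $T^{(2)}(u-\frac13)T^{(2)}(u+\frac13)=T^{(1)}(u-\frac23)T^{(1)}(u)T^{(1)}(u+\frac23)$. $\mathcal{Y}_0(X_r)$ is the abelian group generated by $Y^{(a)}(u)$ with relations (with $Y^{(0)}(u)=1$): simply laced: $Y^{(a)}(u-1)Y^{(a)}(u+1)=\prod_{b:C_{ab}=-1}Y^{(b)}(u)$; $B_r$: $Y^{(a)}(u-1)Y^{(a)}(u+1)=Y^{(a-1)}(u)Y^{(a+1)}(u)$ ($a\le r-2$), $Y^{(r-1)}(u-1)Y^{(r-1)}(u+1)=Y^{(r-2)}(u)Y^{(r)}(u-\frac12)Y^{(r)}(u+\frac12)$, $Y^{(r)}(u-\frac12)Y^{(r)}(u+\frac12)=Y^{(r-1)}(u)$; $C_r$: $Y^{(a)}(u-\frac12)Y^{(a)}(u+\frac12)=Y^{(a-1)}(u)Y^{(a+1)}(u)$ ($a\le r-2$), $Y^{(r-1)}(u-\frac12)Y^{(r-1)}(u+\frac12)=Y^{(r-2)}(u)Y^{(r)}(u)$, $Y^{(r)}(u-1)Y^{(r)}(u+1)=Y^{(r-1)}(u-\frac12)Y^{(r-1)}(u+\frac12)$; $F_4$: $Y^{(1)}(u-1)Y^{(1)}(u+1)=Y^{(2)}(u)$, $Y^{(2)}(u-1)Y^{(2)}(u+1)=Y^{(1)}(u)Y^{(3)}(u-\frac12)Y^{(3)}(u+\frac12)$, $Y^{(3)}(u-\frac12)Y^{(3)}(u+\frac12)=Y^{(2)}(u)Y^{(4)}(u)$,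 $Y^{(4)}(u-\frac12)Y^{(4)}(u+\frac12)=Y^{(3)}(u)$; $G_2$: $Y^{(1)}(u-1)Y^{(1)}(u+1)=Y^{(2)}(u-\frac23)Y^{(2)}(u)Y^{(2)}(u+\frac23)$, $Y^{(2)}(u-\frac13)Y^{(2)}(u+\frac13)=Y^{(1)}(u)$. *)

theory Defs
  imports Main
begin

datatype dynkin = A nat | B nat | C nat | D nat | E6 | E7 | E8 | F4 | G2

fun valid_dynkin :: "dynkin \<Rightarrow> bool" where
  "valid_dynkin (A r) = (r \<ge> 1)"
| "valid_dynkin (B r) = (r \<ge> 2)"
| "valid_dynkin (C r) = (r \<ge> 2)"
| "valid_dynkin (D r) = (r \<ge> 4)"
| "valid_dynkin _ = True"

fun rank :: "dynkin \<Rightarrow> nat" where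
  "rank (A r) = r" | "rank (B r) = r" | "rank (C r) = r" | "rank (D r) = r"
| "rank E6 = 6" | "rank E7 = 7" | "rank E8 = 8" | "rank F4 = 4" | "rank G2 = 2"

definition Iset :: "dynkin \<Rightarrow> nat set" where
  "Iset X = {1..rank X}"

fun tnum :: "dynkin \<Rightarrow> int" where
  "tnum (B r) = 2" | "tnum (C r) = 2" | "tnum F4 = 2" | "tnum G2 = 3" | "tnum _ = 1"

fun simply_laced :: "dynkin \<Rightarrow> bool" where
  "simply_laced (A r) = True" | "simply_laced (D r) = True"
| "simply_laced E6 = True" | "simply_laced E7 = True" | "simply_laced E8 = True"
| "simply_laced _ = False"

fun hdual :: "dynkin \<Rightarrow> int" where
  "hdual (A r) = int r + 1" | "hdual (B r) = 2 * int r - 1" | "hdual (C r) = int r + 1"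
| "hdual (D r) = 2 * int r - 2" | "hdual E6 = 12" | "hdual E7 = 18" | "hdual E8 = 30"
| "hdual F4 = 9" | "hdual G2 = 4"

fun omega :: "dynkin \<Rightarrow> nat \<Rightarrow> nat" where
  "omega (A r) a = r + 1 - a"
| "omega (D r) a = (if odd r then (if a = r - 1 then r else if a = r then r - 1 else a) else a)"
| "omega E6 a = (if a = 1 then 6 else if a = 6 then 1 else if a = 2 then 5
                 else if a = 5 then 2 else a)"
| "omega _ a = a"

text \<open>Edges of the simply laced diagrams (unordered), i.e. C_ab = -1.\<close>
fun sl_edges :: "dynkin \<Rightarrow> (nat \<times> nat) set" where
  "sl_edges (A r) = {(a, a + 1) | a. 1 \<le> a \<and> a + 1 \<le> r}"
| "sl_edges (D r) = {(a, a + 1) | a. 1 \<le> a \<and> a + 1 \<le> r - 1} \<union> {(r - 2, r)}"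
| "sl_edges E6 = {(1,2),(2,3),(3,5),(5,6),(3,4)}"
| "sl_edges E7 = {(1,2),(2,3),(3,4),(4,5),(5,6),(3,7)}"
| "sl_edges E8 = {(1,2),(2,3),(3,4),(4,5),(5,6),(6,7),(5,8)}"
| "sl_edges _ = {}"

definition adj :: "dynkin \<Rightarrow> nat \<Rightarrow> nat \<Rightarrow> bool" where
  "adj X a b \<longleftrightarrow> (a, b) \<in> sl_edges X \<or> (b, a) \<in> sl_edges X"

text \<open>Conventions: abelian groups are written additively (type class ab_group_add),
  so products become sums and inverses become negation. The generator
  T^(a)(u), u \<in> (1/t)Z, is represented as T a k with u = k / t (k :: int).
  The convention T^(0)(u) = 1 becomes the value 0 via z0.\<close>

definition z0 :: "(nat \<Rightarrow> int \<Rightarrow> 'g::ab_group_add) \<Rightarrow> nat \<Rightarrow> int \<Rightarrow> 'g" where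
  "z0 T a k = (if a = 0 then 0 else T a k)"

definition T_sys :: "dynkin \<Rightarrow> (nat \<Rightarrow> int \<Rightarrow> 'g::ab_group_add) \<Rightarrow> bool" where
  "T_sys X T \<longleftrightarrow>
    (simply_laced X \<longrightarrow> (\<forall>a\<in>Iset X. \<forall>k.
        T a (k - 1) + T a (k + 1) = (\<Sum>b\<in>{b\<in>Iset X. adj X a b}. T b k)))
  \<and> (\<forall>r. X = B r \<longrightarrow> (\<forall>k.
        (\<forall>a. 1 \<le> a \<and> a \<le> r - 2 \<longrightarrow> T a (k - 2) + T a (k + 2) = z0 T (a - 1) k + T (a + 1) k)
      \<and> T (r - 1) (k - 2) + T (r - 1) (k + 2) = z0 T (r - 2) k + T r k
      \<and> T r (k - 1) + T r (k + 1) = T (r - 1) (k - 1) + T (r - 1) (k + 1)))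
  \<and> (\<forall>r. X = C r \<longrightarrow> (\<forall>k.
        (\<forall>a. 1 \<le> a \<and> a \<le> r - 2 \<longrightarrow> T a (k - 1) + T a (k + 1) = z0 T (a - 1) k + T (a + 1) k)
      \<and> T (r - 1) (k - 1) + T (r - 1) (k + 1) = z0 T (r - 2) k + T r (k - 1) + T r (k + 1)
      \<and> T r (k - 2) + T r (k + 2) = T (r - 1) k))
  \<and> (X = F4 \<longrightarrow> (\<forall>k.
        T 1 (k - 2) + T 1 (k + 2) = T 2 k
      \<and> T 2 (k - 2) + T 2 (k + 2) = T 1 k + T 3 k
      \<and> T 3 (k - 1) + T 3 (k + 1) = T 2 (k - 1) + T 2 (k + 1) + T 4 k
      \<and> T 4 (k - 1) + T 4 (k + 1) = T 3 k))
  \<and> (X = G2 \<longrightarrow> (\<forall>k.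
        T 1 (k - 3) + T 1 (k + 3) = T 2 k
      \<and> T 2 (k - 1) + T 2 (k + 1) = T 1 (k - 2) + T 1 k + T 1 (k + 2)))"

definition Y_sys :: "dynkin \<Rightarrow> (nat \<Rightarrow> int \<Rightarrow> 'g::ab_group_add) \<Rightarrow> bool" where
  "Y_sys X Y \<longleftrightarrow>
    (simply_laced X \<longrightarrow> (\<forall>a\<in>Iset X. \<forall>k.
        Y a (k - 1) + Y a (k + 1) = (\<Sum>b\<in>{b\<in>Iset X. adj X a b}. Y b k)))
  \<and> (\<forall>r. X = B r \<longrightarrow> (\<forall>k.
        (\<forall>a. 1 \<le> a \<and> a \<le> r - 2 \<longrightarrow> Y a (k - 2) + Y a (k + 2) = z0 Y (a - 1) k + Y (a + 1) k)
      \<and> Y (r - 1) (k - 2) + Y (r - 1) (k + 2) = z0 Y (r - 2) k + Y r (k - 1) + Y r (k + 1)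
      \<and> Y r (k - 1) + Y r (k + 1) = Y (r - 1) k))
  \<and> (\<forall>r. X = C r \<longrightarrow> (\<forall>k.
        (\<forall>a. 1 \<le> a \<and> a \<le> r - 2 \<longrightarrow> Y a (k - 1) + Y a (k + 1) = z0 Y (a - 1) k + Y (a + 1) k)
      \<and> Y (r - 1) (k - 1) + Y (r - 1) (k + 1) = z0 Y (r - 2) k + Y r k
      \<and> Y r (k - 2) + Y r (k + 2) = Y (r - 1) (k - 1) + Y (r - 1) (k + 1)))
  \<and> (X = F4 \<longrightarrow> (\<forall>k.
        Y 1 (k - 2) + Y 1 (k + 2) = Y 2 k
      \<and> Y 2 (k - 2) + Y 2 (k + 2) = Y 1 k + Y 3 (k - 1) + Y 3 (k + 1)
      \<and> Y 3 (k - 1) + Y 3 (k + 1) = Y 2 k + Y 4 k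
      \<and> Y 4 (k - 1) + Y 4 (k + 1) = Y 3 k))
  \<and> (X = G2 \<longrightarrow> (\<forall>k.
        Y 1 (k - 3) + Y 1 (k + 3) = Y 2 (k - 2) + Y 2 k + Y 2 (k + 2)
      \<and> Y 2 (k - 1) + Y 2 (k + 1) = Y 1 k))"

end

theory Submission
  imports Defs
begin

primrec ev :: "(nat \<Rightarrow> int \<Rightarrow> 'g::ab_group_add) \<Rightarrow> int \<Rightarrow> (bool \<times> nat \<times> int) list \<Rightarrow> 'g" where
  "ev V k [] = 0"
| "ev V k (x#xs) = (case x of (b,a,d) \<Rightarrow> if b then V a (k+d) else - V a (k+d)) + ev V k xs"

primrec cnt :: "nat \<times> int \<Rightarrow> (bool \<times> nat \<times> int) list \<Rightarrow> int" where
  "cnt p [] = 0"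
| "cnt p (x#xs) = (case x of (b,a,d) \<Rightarrow> if (a,d) = p then (if b then 1 else -1) else 0) + cnt p xs"

lemma ev_append: "ev V k (xs @ ys) = ev V k xs + ev V k ys"
  by (induction xs) (auto simp: algebra_simps split: prod.splits)

lemma cnt_append: "cnt p (xs @ ys) = cnt p xs + cnt p ys"
  by (induction xs) (auto split: prod.splits)

lemma cnt_sign: "(\<not>b, a, d) \<notin> set ys \<Longrightarrow> (if b then cnt (a,d) ys \<ge> 0 else cnt (a,d) ys \<le> 0)"
  by (induction ys) (auto split: if_splits prod.splits)

lemma ev_zero_aux:
  "length xs = n \<Longrightarrow> (\<forall>(b,a,d)\<in>set xs. cnt (a,d) xs = 0) \<Longrightarrow> ev V k xs = 0"
proof (induction n arbitrary: xs rule: less_induct)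
  case (less n)
  show ?case
  proof (cases xs)
    case Nil then show ?thesis by simp
  next
    case (Cons x ys)
    obtain b a d where x: "x = (b,a,d)" by (cases x) auto
    have c0: "cnt (a,d) xs = 0" using less.prems Cons x by auto
    have "(\<not>b, a, d) \<in> set ys"
    proof (rule ccontr)
      assume "(\<not>b, a, d) \<notin> set ys"
      from cnt_sign[OF this] c0 Cons x show False by (auto split: if_splits)
    qed
    then obtain ys1 ys2 where ys: "ys = ys1 @ (\<not>b, a, d) # ys2" by (meson split_list)
    define zs where "zs = ys1 @ ys2"
    have cz: "cnt p zs = cnt p xs" for p
    proof -
      have "cnt p xs = cnt p ((b,a,d) # ys1 @ (\<not>b, a, d) # ys2)" using Cons x ys by simp
      also have "\<dots> = cnt p ys1 + cnt p ys2" by (simp add: cnt_append)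
      finally show ?thesis by (simp add: zs_def cnt_append)
    qed
    have evz: "ev V k xs = ev V k zs"
      using Cons x ys by (auto simp: zs_def ev_append algebra_simps)
    have lz: "length zs < n" using less.prems Cons ys by (simp add: zs_def)
    have "\<forall>(b,a,d)\<in>set zs. cnt (a,d) zs = 0"
    proof
      fix y assume y: "y \<in> set zs"
      then have "y \<in> set xs" using Cons ys by (auto simp: zs_def)
      then show "case y of (b,a,d) \<Rightarrow> cnt (a,d) zs = 0" using less.prems cz by (auto split: prod.splits)
    qed
    from less.IH[OF lz refl this] evz show ?thesis by simp
  qed
qed

lemma ev_zero: "list_all (\<lambda>(b,a,d). cnt (a,d) xs = 0) xs \<Longrightarrow> ev V k xs = 0"
  using ev_zero_aux[of xs "length xs"] by (auto simp: list_all_iff)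

definition negl :: "(bool \<times> nat \<times> int) list \<Rightarrow> (bool \<times> nat \<times> int) list" where
  "negl xs = map (\<lambda>(b,a,d). (\<not>b,a,d)) xs"

lemma ev_negl: "ev V k (negl xs) = - ev V k xs"
  by (induction xs) (auto simp: negl_def algebra_simps split: prod.splits)

definition comb :: "(nat \<Rightarrow> int \<Rightarrow> (bool \<times> nat \<times> int) list) \<Rightarrow> (bool \<times> nat \<times> int) list \<Rightarrow> (bool \<times> nat \<times> int) list" where
  "comb R cs = concat (map (\<lambda>(b,a,m). if b then R a m else negl (R a m)) cs)"

lemma ev_comb: "(\<And>b a m. (b,a,m) \<in> set cs \<Longrightarrow> ev V k (R a m) = 0) \<Longrightarrow> ev V k (comb R cs) = 0"
proof (induction cs)
  case Nil then show ?case by (simp add: comb_def)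
next
  case (Cons x cs)
  obtain b a m where x: "x = (b,a,m)" by (cases x) auto
  have "ev V k (R a m) = 0" using Cons.prems[of b a m] x by simp
  moreover have "ev V k (comb R cs) = 0" using Cons.IH Cons.prems by (metis list.set_intros(2))
  ultimately show ?case using x by (simp add: comb_def ev_append ev_negl)
qed

definition mk :: "int \<Rightarrow> nat \<Rightarrow> (nat \<times> int) list \<Rightarrow> int \<Rightarrow> (bool \<times> nat \<times> int) list" where
  "mk s a rhs m = [(True,a,m-s),(True,a,m+s)] @ map (\<lambda>(b,d). (False,b,m+d)) rhs"

lemma ev_map_neg: "ev V k (map (\<lambda>(b,d). (False,b,m+d)) rhs) = - sum_list (map (\<lambda>(b,d). V b (k+m+d)) rhs)"
  by (induction rhs) (auto simp: algebra_simps split: prod.splits)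

lemma ev_mk: "ev V k (mk s a rhs m) = V a (k+m-s) + V a (k+m+s) - sum_list (map (\<lambda>(b,d). V b (k+m+d)) rhs)"
proof -
  have e: "k + (m - s) = k + m - s" "k + (m + s) = k + m + s" by simp_all
  show ?thesis unfolding mk_def ev_append ev_map_neg by (simp add: e)
qed

definition RA :: "(nat \<Rightarrow> int \<Rightarrow> (bool \<times> nat \<times> int) list) \<Rightarrow> int \<Rightarrow> (nat \<Rightarrow> nat) \<Rightarrow> nat \<Rightarrow> int \<Rightarrow> (bool \<times> nat \<times> int) list" where
  "RA R H om a m = (if a < 100 then R a m else [(True, a - 100, m + H), (True, om (a - 100), m)])"

lemma ev_comb': "(\<And>b a m. (b,a,m) \<in> set cs \<Longrightarrow> ev V k (R a m) = 0) \<Longrightarrow> ev V k (comb R cs) = 0"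
  by (rule ev_comb)

lemma engine:
  fixes V :: "nat \<Rightarrow> int \<Rightarrow> 'g::ab_group_add"
  assumes R: "\<And>a m. a < 100 \<Longrightarrow> ev V k (R a m) = 0"
  and K: "\<And>b j. b \<in> set kn \<Longrightarrow> V b (j + H) + V (om b) j = 0"
  and C: "list_all (\<lambda>(b,a,m). a < 100 \<or> a - 100 \<in> set kn) cs"
  and Z: "list_all (\<lambda>(b,a,d). cnt (a,d) (tg @ comb (RA R H om) cs) = 0) (tg @ comb (RA R H om) cs)"
  shows "ev V k tg = 0"
proof -
  have "ev V k (comb (RA R H om) cs) = 0"
  proof (rule ev_comb)
    fix b a m assume bam: "(b,a,m) \<in> set cs"
    show "ev V k (RA R H om a m) = 0"
    proof (cases "a < 100")
      case True then show ?thesis using R by (simp add: RA_def)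
    next
      case False
      then have "a - 100 \<in> set kn" using C bam by (auto simp: list_all_iff)
      from K[OF this, of "k + m"] False show ?thesis by (simp add: RA_def algebra_simps)
    qed
  qed
  moreover have "ev V k (tg @ comb (RA R H om) cs) = 0" by (rule ev_zero[OF Z])
  ultimately show ?thesis by (simp add: ev_append)
qed


lemma chain_phi:
  fixes U :: "nat \<Rightarrow> int \<Rightarrow> 'g::ab_group_add"
  assumes U0: "\<And>k. U 0 k = 0"
  and rel: "\<And>a k. 1 \<le> a \<Longrightarrow> a \<le> n \<Longrightarrow> U a (k - s) + U a (k + s) = U (a-1) k + U (a+1) k"
  shows "1 \<le> a \<Longrightarrow> a \<le> n+1 \<Longrightarrow> U a (k+s) = U (a-1) k + U 1 (k + s * int a)"
proof (induction a arbitrary: k)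
  case 0 then show ?case by simp
next
  case (Suc a)
  show ?case
  proof (cases "a = 0")
    case True then show ?thesis by (simp add: U0)
  next
    case False
    have IH: "U a (k+s+s) = U (a-1) (k+s) + U 1 (k + s + s * int a)"
      using Suc.IH[of "k+s"] Suc.prems False by simp
    have R: "U a (k + s - s) + U a (k + s + s) = U (a-1) (k+s) + U (a+1) (k+s)"
      using rel[of a "k+s"] Suc.prems False by simp
    have e: "k + s + s * int a = k + s * int (Suc a)" "k + s - s = k" by (simp_all add: algebra_simps)
    from R IH have "U (a+1) (k+s) = U a k + U 1 (k + s + s * int a)"
      unfolding e by (simp add: algebra_simps)
    then show ?thesis unfolding e by simp
  qed
qed

lemma chain_psi:
  fixes U :: "nat \<Rightarrow> int \<Rightarrow> 'g::ab_group_add"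
  assumes U0: "\<And>k. U 0 k = 0"
  and rel: "\<And>a k. 1 \<le> a \<Longrightarrow> a \<le> n \<Longrightarrow> U a (k - s) + U a (k + s) = U (a-1) k + U (a+1) k"
  shows "a \<le> n \<Longrightarrow> U a (k+s) = U (a+1) k - U 1 (k - s * int a)"
proof (induction a arbitrary: k)
  case 0 then show ?case by (simp add: U0)
next
  case (Suc a)
  have IH: "U a (k - s + s) = U (a+1) (k-s) - U 1 (k - s - s * int a)"
    using Suc.IH[of "k-s"] Suc.prems by simp
  have R: "U (Suc a) (k - s) + U (Suc a) (k + s) = U a k + U (Suc a + 1) k"
    using rel[of "Suc a" k] Suc.prems by simp
  have e: "k - s - s * int a = k - s * int (Suc a)" "k - s + s = k" by (simp_all add: algebra_simps)
  from R IH show ?case unfolding e by (simp add: algebra_simps)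
qed

lemma chain_AP:
  fixes U :: "nat \<Rightarrow> int \<Rightarrow> 'g::ab_group_add"
  assumes U0: "\<And>k. U 0 k = 0"
  and rel: "\<And>a k. 1 \<le> a \<Longrightarrow> a \<le> n \<Longrightarrow> U a (k - s) + U a (k + s) = U (a-1) k + U (a+1) k"
  and ap: "\<And>m. U 1 (m + H) = - U 1 m"
  shows "a \<le> n+1 \<Longrightarrow> U a (m+H) = - U a m"
proof (induction a arbitrary: m)
  case 0 then show ?case by (simp add: U0)
next
  case (Suc a)
  have p1: "U (Suc a) (m - s + s) = U a (m - s) + U 1 (m - s + s * int (Suc a))"
    using chain_phi[OF U0 rel, where a="Suc a" and k="m - s"] Suc.prems by simp
  have p2: "U (Suc a) (m + H - s + s) = U a (m + H - s) + U 1 (m + H - s + s * int (Suc a))"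
    using chain_phi[OF U0 rel, where a="Suc a" and k="m + H - s"] Suc.prems by simp
  have i1: "U a (m - s + H) = - U a (m - s)" using Suc by simp
  have i2: "U 1 (m - s + s * int (Suc a) + H) = - U 1 (m - s + s * int (Suc a))" by (rule ap)
  have e1: "m - s + H = m + H - s" "m - s + s * int (Suc a) + H = m + H - s + s * int (Suc a)"
     "m - s + s = m" "m + H - s + s = m + H" by simp_all
  show ?case using p1 p2 i1 i2 unfolding e1 by simp
qed


definition R_E6 :: "nat \<Rightarrow> int \<Rightarrow> (bool \<times> nat \<times> int) list" where
  "R_E6 a m = (if a = 1 then mk 1 1 [(2,0)] m else if a = 2 then mk 1 2 [(1,0),(3,0)] m else if a = 3 then mk 1 3 [(2,0),(4,0),(5,0)] m else if a = 4 then mk 1 4 [(3,0)] m else if a = 5 then mk 1 5 [(3,0),(6,0)] m else if a = 6 then mk 1 6 [(5,0)] m else [])"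

lemma AP_E6:
  fixes V :: "nat \<Rightarrow> int \<Rightarrow> 'g::ab_group_add"
  assumes r1: "\<And>k. V 1 (k - 1) + V 1 (k + 1) = V 2 k"
  and r2: "\<And>k. V 2 (k - 1) + V 2 (k + 1) = V 1 k + (V 3 k)"
  and r3: "\<And>k. V 3 (k - 1) + V 3 (k + 1) = V 2 k + (V 4 k + (V 5 k))"
  and r4: "\<And>k. V 4 (k - 1) + V 4 (k + 1) = V 3 k"
  and r5: "\<And>k. V 5 (k - 1) + V 5 (k + 1) = V 3 k + (V 6 k)"
  and r6: "\<And>k. V 6 (k - 1) + V 6 (k + 1) = V 5 k"
  shows "\<forall>a\<in>{1..6}. \<forall>j. V a (j + 12) = - V (omega E6 a) j"
proof -
  have R0: "ev V k (R_E6 a m) = 0" for k a m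
  proof -
    consider "a = 1" | "a = 2" | "a = 3" | "a = 4" | "a = 5" | "a = 6" | "a \<notin> {1,2,3,4,5,6}" by blast
    then show ?thesis
    proof cases
      case 1 then show ?thesis using r1[of "k+m"] by (simp add: R_E6_def ev_mk)
    next
      case 2 then show ?thesis using r2[of "k+m"] by (simp add: R_E6_def ev_mk)
    next
      case 3 then show ?thesis using r3[of "k+m"] by (simp add: R_E6_def ev_mk)
    next
      case 4 then show ?thesis using r4[of "k+m"] by (simp add: R_E6_def ev_mk)
    next
      case 5 then show ?thesis using r5[of "k+m"] by (simp add: R_E6_def ev_mk)
    next
      case 6 then show ?thesis using r6[of "k+m"] by (simp add: R_E6_def ev_mk)
    next
      case 7 then show ?thesis by (simp add: R_E6_def)
    qed
  qed
  have R: "\<And>a m. a < 100 \<Longrightarrow> ev V k (R_E6 a m) = 0" for k using R0 by simp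
  have AP1: "V 1 (j + 12) + V (omega E6 1) j = 0" for j
  proof -
    have "ev V j [(True,1,12),(True,omega E6 1,0)] = 0"
    proof (rule engine[where R="R_E6" and H="12" and om="omega E6" and kn="[]" and cs="[(False,1,5),(False,1,11),(False,2,4),(False,2,6),(False,2,10),(False,3,3),(False,3,5),(False,3,7),(False,3,9),(False,4,4),(False,4,8),(False,5,2),(False,5,6),(False,5,8),(False,6,1),(False,6,7)]"])
      show "\<And>a m. a < 100 \<Longrightarrow> ev V j (R_E6 a m) = 0" by (rule R)
      show "\<And>b j. b \<in> set [] \<Longrightarrow> V b (j + 12) + V (omega E6 b) j = 0" by simp
    qed code_simp+
    then show ?thesis by simp
  qed
  have AP6: "V 6 (j + 12) + V (omega E6 6) j = 0" for j
  proof -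
    have "ev V j [(True,6,12),(True,omega E6 6,0)] = 0"
    proof (rule engine[where R="R_E6" and H="12" and om="omega E6" and kn="[1]" and cs="[(False,1,1),(False,1,7),(False,2,2),(False,2,6),(False,2,8),(False,3,3),(False,3,5),(False,3,7),(False,3,9),(False,4,4),(False,4,8),(False,5,4),(False,5,6),(False,5,10),(False,6,5),(False,6,11)]"])
      show "\<And>a m. a < 100 \<Longrightarrow> ev V j (R_E6 a m) = 0" by (rule R)
      show "\<And>b j. b \<in> set [1] \<Longrightarrow> V b (j + 12) + V (omega E6 b) j = 0" using AP1 by auto
    qed code_simp+
    then show ?thesis by simp
  qed
  have AP2: "V 2 (j + 12) + V (omega E6 2) j = 0" for j
  proof -
    have "ev V j [(True,2,12),(True,omega E6 2,0)] = 0"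
    proof (rule engine[where R="R_E6" and H="12" and om="omega E6" and kn="[1,6]" and cs="[(True,1,12),(True,6,0),(False,101,(-1)),(False,101,1)]"])
      show "\<And>a m. a < 100 \<Longrightarrow> ev V j (R_E6 a m) = 0" by (rule R)
      show "\<And>b j. b \<in> set [1,6] \<Longrightarrow> V b (j + 12) + V (omega E6 b) j = 0" using AP1 AP6 by auto
    qed code_simp+
    then show ?thesis by simp
  qed
  have AP5: "V 5 (j + 12) + V (omega E6 5) j = 0" for j
  proof -
    have "ev V j [(True,5,12),(True,omega E6 5,0)] = 0"
    proof (rule engine[where R="R_E6" and H="12" and om="omega E6" and kn="[1,6,2]" and cs="[(True,1,0),(True,6,12),(False,106,(-1)),(False,106,1)]"])
      show "\<And>a m. a < 100 \<Longrightarrow> ev V j (R_E6 a m) = 0" by (rule R)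
      show "\<And>b j. b \<in> set [1,6,2] \<Longrightarrow> V b (j + 12) + V (omega E6 b) j = 0" using AP1 AP6 AP2 by auto
    qed code_simp+
    then show ?thesis by simp
  qed
  have AP3: "V 3 (j + 12) + V (omega E6 3) j = 0" for j
  proof -
    have "ev V j [(True,3,12),(True,omega E6 3,0)] = 0"
    proof (rule engine[where R="R_E6" and H="12" and om="omega E6" and kn="[1,6,2,5]" and cs="[(True,2,12),(True,5,0),(True,101,0),(False,102,(-1)),(False,102,1)]"])
      show "\<And>a m. a < 100 \<Longrightarrow> ev V j (R_E6 a m) = 0" by (rule R)
      show "\<And>b j. b \<in> set [1,6,2,5] \<Longrightarrow> V b (j + 12) + V (omega E6 b) j = 0" using AP1 AP6 AP2 AP5 by auto
    qed code_simp+
    then show ?thesis by simp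
  qed
  have AP4: "V 4 (j + 12) + V (omega E6 4) j = 0" for j
  proof -
    have "ev V j [(True,4,12),(True,omega E6 4,0)] = 0"
    proof (rule engine[where R="R_E6" and H="12" and om="omega E6" and kn="[1,6,2,5,3]" and cs="[(True,3,0),(True,3,12),(True,102,0),(False,103,(-1)),(False,103,1),(True,105,0)]"])
      show "\<And>a m. a < 100 \<Longrightarrow> ev V j (R_E6 a m) = 0" by (rule R)
      show "\<And>b j. b \<in> set [1,6,2,5,3] \<Longrightarrow> V b (j + 12) + V (omega E6 b) j = 0" using AP1 AP6 AP2 AP5 AP3 by auto
    qed code_simp+
    then show ?thesis by simp
  qed
  show ?thesis
  proof (intro ballI allI)
    fix a j assume "a \<in> {1..6::nat}"
    then have "a = 1 \<or> a = 2 \<or> a = 3 \<or> a = 4 \<or> a = 5 \<or> a = 6" by auto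
    then show "V a (j + 12) = - V (omega E6 a) j"
      using AP1 AP2 AP3 AP4 AP5 AP6 by (auto simp: eq_neg_iff_add_eq_0)
  qed
qed

definition R_E7 :: "nat \<Rightarrow> int \<Rightarrow> (bool \<times> nat \<times> int) list" where
  "R_E7 a m = (if a = 1 then mk 1 1 [(2,0)] m else if a = 2 then mk 1 2 [(1,0),(3,0)] m else if a = 3 then mk 1 3 [(2,0),(4,0),(7,0)] m else if a = 4 then mk 1 4 [(3,0),(5,0)] m else if a = 5 then mk 1 5 [(4,0),(6,0)] m else if a = 6 then mk 1 6 [(5,0)] m else if a = 7 then mk 1 7 [(3,0)] m else [])"

lemma AP_E7:
  fixes V :: "nat \<Rightarrow> int \<Rightarrow> 'g::ab_group_add"
  assumes r1: "\<And>k. V 1 (k - 1) + V 1 (k + 1) = V 2 k"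
  and r2: "\<And>k. V 2 (k - 1) + V 2 (k + 1) = V 1 k + (V 3 k)"
  and r3: "\<And>k. V 3 (k - 1) + V 3 (k + 1) = V 2 k + (V 4 k + (V 7 k))"
  and r4: "\<And>k. V 4 (k - 1) + V 4 (k + 1) = V 3 k + (V 5 k)"
  and r5: "\<And>k. V 5 (k - 1) + V 5 (k + 1) = V 4 k + (V 6 k)"
  and r6: "\<And>k. V 6 (k - 1) + V 6 (k + 1) = V 5 k"
  and r7: "\<And>k. V 7 (k - 1) + V 7 (k + 1) = V 3 k"
  shows "\<forall>a\<in>{1..7}. \<forall>j. V a (j + 18) = - V (omega E7 a) j"
proof -
  have R0: "ev V k (R_E7 a m) = 0" for k a m
  proof -
    consider "a = 1" | "a = 2" | "a = 3" | "a = 4" | "a = 5" | "a = 6" | "a = 7" | "a \<notin> {1,2,3,4,5,6,7}" by blast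
    then show ?thesis
    proof cases
      case 1 then show ?thesis using r1[of "k+m"] by (simp add: R_E7_def ev_mk)
    next
      case 2 then show ?thesis using r2[of "k+m"] by (simp add: R_E7_def ev_mk)
    next
      case 3 then show ?thesis using r3[of "k+m"] by (simp add: R_E7_def ev_mk)
    next
      case 4 then show ?thesis using r4[of "k+m"] by (simp add: R_E7_def ev_mk)
    next
      case 5 then show ?thesis using r5[of "k+m"] by (simp add: R_E7_def ev_mk)
    next
      case 6 then show ?thesis using r6[of "k+m"] by (simp add: R_E7_def ev_mk)
    next
      case 7 then show ?thesis using r7[of "k+m"] by (simp add: R_E7_def ev_mk)
    next
      case 8 then show ?thesis by (simp add: R_E7_def)
    qed
  qed
  have R: "\<And>a m. a < 100 \<Longrightarrow> ev V k (R_E7 a m) = 0" for k using R0 by simp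
  have AP1: "V 1 (j + 18) + V (omega E7 1) j = 0" for j
  proof -
    have "ev V j [(True,1,18),(True,omega E7 1,0)] = 0"
    proof (rule engine[where R="R_E7" and H="18" and om="omega E7" and kn="[]" and cs="[(False,1,1),(False,1,7),(False,1,11),(False,1,17),(False,2,2),(False,2,6),(False,2,8),(False,2,10),(False,2,12),(False,2,16),(False,3,3),(False,3,5),(False,3,7),(False,3,9),(False,3,9),(False,3,11),(False,3,13),(False,3,15),(False,4,4),(False,4,6),(False,4,8),(False,4,10),(False,4,12),(False,4,14),(False,5,5),(False,5,7),(False,5,11),(False,5,13),(False,6,6),(False,6,12),(False,7,4),(False,7,8),(False,7,10),(False,7,14)]"])
      show "\<And>a m. a < 100 \<Longrightarrow> ev V j (R_E7 a m) = 0" by (rule R)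
      show "\<And>b j. b \<in> set [] \<Longrightarrow> V b (j + 18) + V (omega E7 b) j = 0" by simp
    qed code_simp+
    then show ?thesis by simp
  qed
  have AP6: "V 6 (j + 18) + V (omega E7 6) j = 0" for j
  proof -
    have "ev V j [(True,6,18),(True,omega E7 6,0)] = 0"
    proof (rule engine[where R="R_E7" and H="18" and om="omega E7" and kn="[1]" and cs="[(False,1,6),(False,1,12),(False,2,5),(False,2,7),(False,2,11),(False,2,13),(False,3,4),(False,3,6),(False,3,8),(False,3,10),(False,3,12),(False,3,14),(False,4,3),(False,4,7),(False,4,9),(False,4,11),(False,4,15),(False,5,2),(False,5,8),(False,5,10),(False,5,16),(False,6,1),(False,6,9),(False,6,17),(False,7,5),(False,7,9),(False,7,13)]"])
      show "\<And>a m. a < 100 \<Longrightarrow> ev V j (R_E7 a m) = 0" by (rule R)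
      show "\<And>b j. b \<in> set [1] \<Longrightarrow> V b (j + 18) + V (omega E7 b) j = 0" using AP1 by auto
    qed code_simp+
    then show ?thesis by simp
  qed
  have AP2: "V 2 (j + 18) + V (omega E7 2) j = 0" for j
  proof -
    have "ev V j [(True,2,18),(True,omega E7 2,0)] = 0"
    proof (rule engine[where R="R_E7" and H="18" and om="omega E7" and kn="[1,6]" and cs="[(True,1,0),(True,1,18),(False,101,(-1)),(False,101,1)]"])
      show "\<And>a m. a < 100 \<Longrightarrow> ev V j (R_E7 a m) = 0" by (rule R)
      show "\<And>b j. b \<in> set [1,6] \<Longrightarrow> V b (j + 18) + V (omega E7 b) j = 0" using AP1 AP6 by auto
    qed code_simp+
    then show ?thesis by simp
  qed
  have AP3: "V 3 (j + 18) + V (omega E7 3) j = 0" for j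
  proof -
    have "ev V j [(True,3,18),(True,omega E7 3,0)] = 0"
    proof (rule engine[where R="R_E7" and H="18" and om="omega E7" and kn="[1,6,2]" and cs="[(True,2,0),(True,2,18),(True,101,0),(False,102,(-1)),(False,102,1)]"])
      show "\<And>a m. a < 100 \<Longrightarrow> ev V j (R_E7 a m) = 0" by (rule R)
      show "\<And>b j. b \<in> set [1,6,2] \<Longrightarrow> V b (j + 18) + V (omega E7 b) j = 0" using AP1 AP6 AP2 by auto
    qed code_simp+
    then show ?thesis by simp
  qed
  have AP5: "V 5 (j + 18) + V (omega E7 5) j = 0" for j
  proof -
    have "ev V j [(True,5,18),(True,omega E7 5,0)] = 0"
    proof (rule engine[where R="R_E7" and H="18" and om="omega E7" and kn="[1,6,2,3]" and cs="[(True,6,0),(True,6,18),(False,106,(-1)),(False,106,1)]"])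
      show "\<And>a m. a < 100 \<Longrightarrow> ev V j (R_E7 a m) = 0" by (rule R)
      show "\<And>b j. b \<in> set [1,6,2,3] \<Longrightarrow> V b (j + 18) + V (omega E7 b) j = 0" using AP1 AP6 AP2 AP3 by auto
    qed code_simp+
    then show ?thesis by simp
  qed
  have AP4: "V 4 (j + 18) + V (omega E7 4) j = 0" for j
  proof -
    have "ev V j [(True,4,18),(True,omega E7 4,0)] = 0"
    proof (rule engine[where R="R_E7" and H="18" and om="omega E7" and kn="[1,6,2,3,5]" and cs="[(True,5,0),(True,5,18),(False,105,(-1)),(False,105,1),(True,106,0)]"])
      show "\<And>a m. a < 100 \<Longrightarrow> ev V j (R_E7 a m) = 0" by (rule R)
      show "\<And>b j. b \<in> set [1,6,2,3,5] \<Longrightarrow> V b (j + 18) + V (omega E7 b) j = 0" using AP1 AP6 AP2 AP3 AP5 by auto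
    qed code_simp+
    then show ?thesis by simp
  qed
  have AP7: "V 7 (j + 18) + V (omega E7 7) j = 0" for j
  proof -
    have "ev V j [(True,7,18),(True,omega E7 7,0)] = 0"
    proof (rule engine[where R="R_E7" and H="18" and om="omega E7" and kn="[1,6,2,3,5,4]" and cs="[(True,3,0),(True,3,18),(True,102,0),(False,103,(-1)),(False,103,1),(True,104,0)]"])
      show "\<And>a m. a < 100 \<Longrightarrow> ev V j (R_E7 a m) = 0" by (rule R)
      show "\<And>b j. b \<in> set [1,6,2,3,5,4] \<Longrightarrow> V b (j + 18) + V (omega E7 b) j = 0" using AP1 AP6 AP2 AP3 AP5 AP4 by auto
    qed code_simp+
    then show ?thesis by simp
  qed
  show ?thesis
  proof (intro ballI allI)
    fix a j assume "a \<in> {1..7::nat}"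
    then have "a = 1 \<or> a = 2 \<or> a = 3 \<or> a = 4 \<or> a = 5 \<or> a = 6 \<or> a = 7" by auto
    then show "V a (j + 18) = - V (omega E7 a) j"
      using AP1 AP2 AP3 AP4 AP5 AP6 AP7 by (auto simp: eq_neg_iff_add_eq_0)
  qed
qed

definition R_E8 :: "nat \<Rightarrow> int \<Rightarrow> (bool \<times> nat \<times> int) list" where
  "R_E8 a m = (if a = 1 then mk 1 1 [(2,0)] m else if a = 2 then mk 1 2 [(1,0),(3,0)] m else if a = 3 then mk 1 3 [(2,0),(4,0)] m else if a = 4 then mk 1 4 [(3,0),(5,0)] m else if a = 5 then mk 1 5 [(4,0),(6,0),(8,0)] m else if a = 6 then mk 1 6 [(5,0),(7,0)] m else if a = 7 then mk 1 7 [(6,0)] m else if a = 8 then mk 1 8 [(5,0)] m else [])"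

lemma AP_E8:
  fixes V :: "nat \<Rightarrow> int \<Rightarrow> 'g::ab_group_add"
  assumes r1: "\<And>k. V 1 (k - 1) + V 1 (k + 1) = V 2 k"
  and r2: "\<And>k. V 2 (k - 1) + V 2 (k + 1) = V 1 k + (V 3 k)"
  and r3: "\<And>k. V 3 (k - 1) + V 3 (k + 1) = V 2 k + (V 4 k)"
  and r4: "\<And>k. V 4 (k - 1) + V 4 (k + 1) = V 3 k + (V 5 k)"
  and r5: "\<And>k. V 5 (k - 1) + V 5 (k + 1) = V 4 k + (V 6 k + (V 8 k))"
  and r6: "\<And>k. V 6 (k - 1) + V 6 (k + 1) = V 5 k + (V 7 k)"
  and r7: "\<And>k. V 7 (k - 1) + V 7 (k + 1) = V 6 k"
  and r8: "\<And>k. V 8 (k - 1) + V 8 (k + 1) = V 5 k"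
  shows "\<forall>a\<in>{1..8}. \<forall>j. V a (j + 30) = - V (omega E8 a) j"
proof -
  have R0: "ev V k (R_E8 a m) = 0" for k a m
  proof -
    consider "a = 1" | "a = 2" | "a = 3" | "a = 4" | "a = 5" | "a = 6" | "a = 7" | "a = 8" | "a \<notin> {1,2,3,4,5,6,7,8}" by blast
    then show ?thesis
    proof cases
      case 1 then show ?thesis using r1[of "k+m"] by (simp add: R_E8_def ev_mk)
    next
      case 2 then show ?thesis using r2[of "k+m"] by (simp add: R_E8_def ev_mk)
    next
      case 3 then show ?thesis using r3[of "k+m"] by (simp add: R_E8_def ev_mk)
    next
      case 4 then show ?thesis using r4[of "k+m"] by (simp add: R_E8_def ev_mk)
    next
      case 5 then show ?thesis using r5[of "k+m"] by (simp add: R_E8_def ev_mk)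
    next
      case 6 then show ?thesis using r6[of "k+m"] by (simp add: R_E8_def ev_mk)
    next
      case 7 then show ?thesis using r7[of "k+m"] by (simp add: R_E8_def ev_mk)
    next
      case 8 then show ?thesis using r8[of "k+m"] by (simp add: R_E8_def ev_mk)
    next
      case 9 then show ?thesis by (simp add: R_E8_def)
    qed
  qed
  have R: "\<And>a m. a < 100 \<Longrightarrow> ev V k (R_E8 a m) = 0" for k using R0 by simp
  have AP1: "V 1 (j + 30) + V (omega E8 1) j = 0" for j
  proof -
    have "ev V j [(True,1,30),(True,omega E8 1,0)] = 0"
    proof (rule engine[where R="R_E8" and H="30" and om="omega E8" and kn="[]" and cs="[(False,1,1),(False,1,11),(False,1,19),(False,1,29),(False,2,2),(False,2,10),(False,2,12),(False,2,18),(False,2,20),(False,2,28),(False,3,3),(False,3,9),(False,3,11),(False,3,13),(False,3,17),(False,3,19),(False,3,21),(False,3,27),(False,4,4),(False,4,8),(False,4,10),(False,4,12),(False,4,14),(False,4,16),(False,4,18),(False,4,20),(False,4,22),(False,4,26),(False,5,5),(False,5,7),(False,5,9),(False,5,11),(False,5,13),(False,5,15),(False,5,15),(False,5,17),(False,5,19),(False,5,21),(False,5,23),(False,5,25),(False,6,6),(False,6,8),(False,6,12),(False,6,14),(False,6,16),(False,6,18),(False,6,22),(False,6,24),(False,7,7),(False,7,13),(False,7,17),(False,7,23),(False,8,6),(False,8,10),(False,8,14),(False,8,16),(False,8,20),(False,8,24)]"])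
      show "\<And>a m. a < 100 \<Longrightarrow> ev V j (R_E8 a m) = 0" by (rule R)
      show "\<And>b j. b \<in> set [] \<Longrightarrow> V b (j + 30) + V (omega E8 b) j = 0" by simp
    qed code_simp+
    then show ?thesis by simp
  qed
  have AP7: "V 7 (j + 30) + V (omega E8 7) j = 0" for j
  proof -
    have "ev V j [(True,7,30),(True,omega E8 7,0)] = 0"
    proof (rule engine[where R="R_E8" and H="30" and om="omega E8" and kn="[1]" and cs="[(False,1,7),(False,1,13),(False,1,17),(False,1,23),(False,2,6),(False,2,8),(False,2,12),(False,2,14),(False,2,16),(False,2,18),(False,2,22),(False,2,24),(False,3,5),(False,3,7),(False,3,9),(False,3,11),(False,3,13),(False,3,15),(False,3,15),(False,3,17),(False,3,19),(False,3,21),(False,3,23),(False,3,25),(False,4,4),(False,4,6),(False,4,8),(False,4,10),(False,4,10),(False,4,12),(False,4,14),(False,4,14),(False,4,16),(False,4,16),(False,4,18),(False,4,20),(False,4,20),(False,4,22),(False,4,24),(False,4,26),(False,5,3),(False,5,5),(False,5,7),(False,5,9),(False,5,9),(False,5,11),(False,5,11),(False,5,13),(False,5,13),(False,5,15),(False,5,15),(False,5,17),(False,5,17),(False,5,19),(False,5,19),(False,5,21),(False,5,21),(False,5,23),(False,5,25),(False,5,27),(False,6,2),(False,6,6),(False,6,8),(False,6,10),(False,6,12),(False,6,12),(False,6,14),(False,6,16),(False,6,18),(False,6,18),(False,6,20),(False,6,22),(False,6,24),(False,6,28),(False,7,1),(False,7,7),(False,7,11),(False,7,13),(False,7,17),(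False,7,19),(False,7,23),(False,7,29),(False,8,4),(False,8,8),(False,8,10),(False,8,12),(False,8,14),(False,8,16),(False,8,18),(False,8,20),(False,8,22),(False,8,26)]"])
      show "\<And>a m. a < 100 \<Longrightarrow> ev V j (R_E8 a m) = 0" by (rule R)
      show "\<And>b j. b \<in> set [1] \<Longrightarrow> V b (j + 30) + V (omega E8 b) j = 0" using AP1 by auto
    qed code_simp+
    then show ?thesis by simp
  qed
  have AP2: "V 2 (j + 30) + V (omega E8 2) j = 0" for j
  proof -
    have "ev V j [(True,2,30),(True,omega E8 2,0)] = 0"
    proof (rule engine[where R="R_E8" and H="30" and om="omega E8" and kn="[1,7]" and cs="[(True,1,0),(True,1,30),(False,101,(-1)),(False,101,1)]"])
      show "\<And>a m. a < 100 \<Longrightarrow> ev V j (R_E8 a m) = 0" by (rule R)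
      show "\<And>b j. b \<in> set [1,7] \<Longrightarrow> V b (j + 30) + V (omega E8 b) j = 0" using AP1 AP7 by auto
    qed code_simp+
    then show ?thesis by simp
  qed
  have AP3: "V 3 (j + 30) + V (omega E8 3) j = 0" for j
  proof -
    have "ev V j [(True,3,30),(True,omega E8 3,0)] = 0"
    proof (rule engine[where R="R_E8" and H="30" and om="omega E8" and kn="[1,7,2]" and cs="[(True,2,0),(True,2,30),(True,101,0),(False,102,(-1)),(False,102,1)]"])
      show "\<And>a m. a < 100 \<Longrightarrow> ev V j (R_E8 a m) = 0" by (rule R)
      show "\<And>b j. b \<in> set [1,7,2] \<Longrightarrow> V b (j + 30) + V (omega E8 b) j = 0" using AP1 AP7 AP2 by auto
    qed code_simp+
    then show ?thesis by simp
  qed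
  have AP4: "V 4 (j + 30) + V (omega E8 4) j = 0" for j
  proof -
    have "ev V j [(True,4,30),(True,omega E8 4,0)] = 0"
    proof (rule engine[where R="R_E8" and H="30" and om="omega E8" and kn="[1,7,2,3]" and cs="[(True,3,0),(True,3,30),(True,102,0),(False,103,(-1)),(False,103,1)]"])
      show "\<And>a m. a < 100 \<Longrightarrow> ev V j (R_E8 a m) = 0" by (rule R)
      show "\<And>b j. b \<in> set [1,7,2,3] \<Longrightarrow> V b (j + 30) + V (omega E8 b) j = 0" using AP1 AP7 AP2 AP3 by auto
    qed code_simp+
    then show ?thesis by simp
  qed
  have AP5: "V 5 (j + 30) + V (omega E8 5) j = 0" for j
  proof -
    have "ev V j [(True,5,30),(True,omega E8 5,0)] = 0"
    proof (rule engine[where R="R_E8" and H="30" and om="omega E8" and kn="[1,7,2,3,4]" and cs="[(True,4,0),(True,4,30),(True,103,0),(False,104,(-1)),(False,104,1)]"])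
      show "\<And>a m. a < 100 \<Longrightarrow> ev V j (R_E8 a m) = 0" by (rule R)
      show "\<And>b j. b \<in> set [1,7,2,3,4] \<Longrightarrow> V b (j + 30) + V (omega E8 b) j = 0" using AP1 AP7 AP2 AP3 AP4 by auto
    qed code_simp+
    then show ?thesis by simp
  qed
  have AP6: "V 6 (j + 30) + V (omega E8 6) j = 0" for j
  proof -
    have "ev V j [(True,6,30),(True,omega E8 6,0)] = 0"
    proof (rule engine[where R="R_E8" and H="30" and om="omega E8" and kn="[1,7,2,3,4,5]" and cs="[(True,7,0),(True,7,30),(False,107,(-1)),(False,107,1)]"])
      show "\<And>a m. a < 100 \<Longrightarrow> ev V j (R_E8 a m) = 0" by (rule R)
      show "\<And>b j. b \<in> set [1,7,2,3,4,5] \<Longrightarrow> V b (j + 30) + V (omega E8 b) j = 0" using AP1 AP7 AP2 AP3 AP4 AP5 by auto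
    qed code_simp+
    then show ?thesis by simp
  qed
  have AP8: "V 8 (j + 30) + V (omega E8 8) j = 0" for j
  proof -
    have "ev V j [(True,8,30),(True,omega E8 8,0)] = 0"
    proof (rule engine[where R="R_E8" and H="30" and om="omega E8" and kn="[1,7,2,3,4,5,6]" and cs="[(True,5,0),(True,5,30),(True,104,0),(False,105,(-1)),(False,105,1),(True,106,0)]"])
      show "\<And>a m. a < 100 \<Longrightarrow> ev V j (R_E8 a m) = 0" by (rule R)
      show "\<And>b j. b \<in> set [1,7,2,3,4,5,6] \<Longrightarrow> V b (j + 30) + V (omega E8 b) j = 0" using AP1 AP7 AP2 AP3 AP4 AP5 AP6 by auto
    qed code_simp+
    then show ?thesis by simp
  qed
  show ?thesis
  proof (intro ballI allI)
    fix a j assume "a \<in> {1..8::nat}"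
    then have "a = 1 \<or> a = 2 \<or> a = 3 \<or> a = 4 \<or> a = 5 \<or> a = 6 \<or> a = 7 \<or> a = 8" by auto
    then show "V a (j + 30) = - V (omega E8 a) j"
      using AP1 AP2 AP3 AP4 AP5 AP6 AP7 AP8 by (auto simp: eq_neg_iff_add_eq_0)
  qed
qed

definition R_F4T :: "nat \<Rightarrow> int \<Rightarrow> (bool \<times> nat \<times> int) list" where
  "R_F4T a m = (if a = 1 then mk 2 1 [(2,0)] m else if a = 2 then mk 2 2 [(1,0),(3,0)] m else if a = 3 then mk 1 3 [(2,(-1)),(2,1),(4,0)] m else if a = 4 then mk 1 4 [(3,0)] m else [])"

lemma AP_F4T:
  fixes V :: "nat \<Rightarrow> int \<Rightarrow> 'g::ab_group_add"
  assumes r1: "\<And>k. V 1 (k - 2) + V 1 (k + 2) = V 2 k"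
  and r2: "\<And>k. V 2 (k - 2) + V 2 (k + 2) = V 1 k + (V 3 k)"
  and r3: "\<And>k. V 3 (k - 1) + V 3 (k + 1) = V 2 (k - 1) + (V 2 (k + 1) + (V 4 k))"
  and r4: "\<And>k. V 4 (k - 1) + V 4 (k + 1) = V 3 k"
  shows "\<forall>a\<in>{1..4}. \<forall>j. V a (j + 18) = - V (omega F4 a) j"
proof -
  have R0: "ev V k (R_F4T a m) = 0" for k a m
  proof -
    consider "a = 1" | "a = 2" | "a = 3" | "a = 4" | "a \<notin> {1,2,3,4}" by blast
    then show ?thesis
    proof cases
      case 1 then show ?thesis using r1[of "k+m"] by (simp add: R_F4T_def ev_mk)
    next
      case 2 then show ?thesis using r2[of "k+m"] by (simp add: R_F4T_def ev_mk)
    next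
      case 3 then show ?thesis using r3[of "k+m"] by (simp add: R_F4T_def ev_mk)
    next
      case 4 then show ?thesis using r4[of "k+m"] by (simp add: R_F4T_def ev_mk)
    next
      case 5 then show ?thesis by (simp add: R_F4T_def)
    qed
  qed
  have R: "\<And>a m. a < 100 \<Longrightarrow> ev V k (R_F4T a m) = 0" for k using R0 by simp
  have AP1: "V 1 (j + 18) + V (omega F4 1) j = 0" for j
  proof -
    have "ev V j [(True,1,18),(True,omega F4 1,0)] = 0"
    proof (rule engine[where R="R_F4T" and H="18" and om="omega F4" and kn="[]" and cs="[(False,1,2),(False,1,8),(False,1,10),(False,1,16),(False,2,4),(False,2,6),(False,2,8),(False,2,10),(False,2,12),(False,2,14),(False,3,5),(False,3,7),(False,3,11),(False,3,13),(False,4,6),(False,4,12)]"])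
      show "\<And>a m. a < 100 \<Longrightarrow> ev V j (R_F4T a m) = 0" by (rule R)
      show "\<And>b j. b \<in> set [] \<Longrightarrow> V b (j + 18) + V (omega F4 b) j = 0" by simp
    qed code_simp+
    then show ?thesis by simp
  qed
  have AP2: "V 2 (j + 18) + V (omega F4 2) j = 0" for j
  proof -
    have "ev V j [(True,2,18),(True,omega F4 2,0)] = 0"
    proof (rule engine[where R="R_F4T" and H="18" and om="omega F4" and kn="[1]" and cs="[(True,1,0),(True,1,18),(False,101,(-2)),(False,101,2)]"])
      show "\<And>a m. a < 100 \<Longrightarrow> ev V j (R_F4T a m) = 0" by (rule R)
      show "\<And>b j. b \<in> set [1] \<Longrightarrow> V b (j + 18) + V (omega F4 b) j = 0" using AP1 by auto
    qed code_simp+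
    then show ?thesis by simp
  qed
  have AP3: "V 3 (j + 18) + V (omega F4 3) j = 0" for j
  proof -
    have "ev V j [(True,3,18),(True,omega F4 3,0)] = 0"
    proof (rule engine[where R="R_F4T" and H="18" and om="omega F4" and kn="[1,2]" and cs="[(True,2,0),(True,2,18),(True,101,0),(False,102,(-2)),(False,102,2)]"])
      show "\<And>a m. a < 100 \<Longrightarrow> ev V j (R_F4T a m) = 0" by (rule R)
      show "\<And>b j. b \<in> set [1,2] \<Longrightarrow> V b (j + 18) + V (omega F4 b) j = 0" using AP1 AP2 by auto
    qed code_simp+
    then show ?thesis by simp
  qed
  have AP4: "V 4 (j + 18) + V (omega F4 4) j = 0" for j
  proof -
    have "ev V j [(True,4,18),(True,omega F4 4,0)] = 0"
    proof (rule engine[where R="R_F4T" and H="18" and om="omega F4" and kn="[1,2,3]" and cs="[(True,3,0),(True,3,18),(True,102,(-1)),(True,102,1),(False,103,(-1)),(False,103,1)]"])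
      show "\<And>a m. a < 100 \<Longrightarrow> ev V j (R_F4T a m) = 0" by (rule R)
      show "\<And>b j. b \<in> set [1,2,3] \<Longrightarrow> V b (j + 18) + V (omega F4 b) j = 0" using AP1 AP2 AP3 by auto
    qed code_simp+
    then show ?thesis by simp
  qed
  show ?thesis
  proof (intro ballI allI)
    fix a j assume "a \<in> {1..4::nat}"
    then have "a = 1 \<or> a = 2 \<or> a = 3 \<or> a = 4" by auto
    then show "V a (j + 18) = - V (omega F4 a) j"
      using AP1 AP2 AP3 AP4 by (auto simp: eq_neg_iff_add_eq_0)
  qed
qed

definition R_F4Y :: "nat \<Rightarrow> int \<Rightarrow> (bool \<times> nat \<times> int) list" where
  "R_F4Y a m = (if a = 1 then mk 2 1 [(2,0)] m else if a = 2 then mk 2 2 [(1,0),(3,(-1)),(3,1)] m else if a = 3 then mk 1 3 [(2,0),(4,0)] m else if a = 4 then mk 1 4 [(3,0)] m else [])"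

lemma AP_F4Y:
  fixes V :: "nat \<Rightarrow> int \<Rightarrow> 'g::ab_group_add"
  assumes r1: "\<And>k. V 1 (k - 2) + V 1 (k + 2) = V 2 k"
  and r2: "\<And>k. V 2 (k - 2) + V 2 (k + 2) = V 1 k + (V 3 (k - 1) + (V 3 (k + 1)))"
  and r3: "\<And>k. V 3 (k - 1) + V 3 (k + 1) = V 2 k + (V 4 k)"
  and r4: "\<And>k. V 4 (k - 1) + V 4 (k + 1) = V 3 k"
  shows "\<forall>a\<in>{1..4}. \<forall>j. V a (j + 18) = - V (omega F4 a) j"
proof -
  have R0: "ev V k (R_F4Y a m) = 0" for k a m
  proof -
    consider "a = 1" | "a = 2" | "a = 3" | "a = 4" | "a \<notin> {1,2,3,4}" by blast
    then show ?thesis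
    proof cases
      case 1 then show ?thesis using r1[of "k+m"] by (simp add: R_F4Y_def ev_mk)
    next
      case 2 then show ?thesis using r2[of "k+m"] by (simp add: R_F4Y_def ev_mk)
    next
      case 3 then show ?thesis using r3[of "k+m"] by (simp add: R_F4Y_def ev_mk)
    next
      case 4 then show ?thesis using r4[of "k+m"] by (simp add: R_F4Y_def ev_mk)
    next
      case 5 then show ?thesis by (simp add: R_F4Y_def)
    qed
  qed
  have R: "\<And>a m. a < 100 \<Longrightarrow> ev V k (R_F4Y a m) = 0" for k using R0 by simp
  have AP4: "V 4 (j + 18) + V (omega F4 4) j = 0" for j
  proof -
    have "ev V j [(True,4,18),(True,omega F4 4,0)] = 0"
    proof (rule engine[where R="R_F4Y" and H="18" and om="omega F4" and kn="[]" and cs="[(False,1,6),(False,1,12),(False,2,4),(False,2,8),(False,2,10),(False,2,14),(False,3,2),(False,3,6),(False,3,8),(False,3,10),(False,3,12),(False,3,16),(False,4,1),(False,4,7),(False,4,11),(False,4,17)]"])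
      show "\<And>a m. a < 100 \<Longrightarrow> ev V j (R_F4Y a m) = 0" by (rule R)
      show "\<And>b j. b \<in> set [] \<Longrightarrow> V b (j + 18) + V (omega F4 b) j = 0" by simp
    qed code_simp+
    then show ?thesis by simp
  qed
  have AP3: "V 3 (j + 18) + V (omega F4 3) j = 0" for j
  proof -
    have "ev V j [(True,3,18),(True,omega F4 3,0)] = 0"
    proof (rule engine[where R="R_F4Y" and H="18" and om="omega F4" and kn="[4]" and cs="[(True,4,0),(True,4,18),(False,104,(-1)),(False,104,1)]"])
      show "\<And>a m. a < 100 \<Longrightarrow> ev V j (R_F4Y a m) = 0" by (rule R)
      show "\<And>b j. b \<in> set [4] \<Longrightarrow> V b (j + 18) + V (omega F4 b) j = 0" using AP4 by auto
    qed code_simp+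
    then show ?thesis by simp
  qed
  have AP2: "V 2 (j + 18) + V (omega F4 2) j = 0" for j
  proof -
    have "ev V j [(True,2,18),(True,omega F4 2,0)] = 0"
    proof (rule engine[where R="R_F4Y" and H="18" and om="omega F4" and kn="[4,3]" and cs="[(True,3,0),(True,3,18),(False,103,(-1)),(False,103,1),(True,104,0)]"])
      show "\<And>a m. a < 100 \<Longrightarrow> ev V j (R_F4Y a m) = 0" by (rule R)
      show "\<And>b j. b \<in> set [4,3] \<Longrightarrow> V b (j + 18) + V (omega F4 b) j = 0" using AP4 AP3 by auto
    qed code_simp+
    then show ?thesis by simp
  qed
  have AP1: "V 1 (j + 18) + V (omega F4 1) j = 0" for j
  proof -
    have "ev V j [(True,1,18),(True,omega F4 1,0)] = 0"
    proof (rule engine[where R="R_F4Y" and H="18" and om="omega F4" and kn="[4,3,2]" and cs="[(True,2,0),(True,2,18),(False,102,(-2)),(False,102,2),(True,103,(-1)),(True,103,1)]"])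
      show "\<And>a m. a < 100 \<Longrightarrow> ev V j (R_F4Y a m) = 0" by (rule R)
      show "\<And>b j. b \<in> set [4,3,2] \<Longrightarrow> V b (j + 18) + V (omega F4 b) j = 0" using AP4 AP3 AP2 by auto
    qed code_simp+
    then show ?thesis by simp
  qed
  show ?thesis
  proof (intro ballI allI)
    fix a j assume "a \<in> {1..4::nat}"
    then have "a = 1 \<or> a = 2 \<or> a = 3 \<or> a = 4" by auto
    then show "V a (j + 18) = - V (omega F4 a) j"
      using AP1 AP2 AP3 AP4 by (auto simp: eq_neg_iff_add_eq_0)
  qed
qed

definition R_G2T :: "nat \<Rightarrow> int \<Rightarrow> (bool \<times> nat \<times> int) list" where
  "R_G2T a m = (if a = 1 then mk 3 1 [(2,0)] m else if a = 2 then mk 1 2 [(1,(-2)),(1,0),(1,2)] m else [])"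

lemma AP_G2T:
  fixes V :: "nat \<Rightarrow> int \<Rightarrow> 'g::ab_group_add"
  assumes r1: "\<And>k. V 1 (k - 3) + V 1 (k + 3) = V 2 k"
  and r2: "\<And>k. V 2 (k - 1) + V 2 (k + 1) = V 1 (k - 2) + (V 1 k + (V 1 (k + 2)))"
  shows "\<forall>a\<in>{1..2}. \<forall>j. V a (j + 12) = - V (omega G2 a) j"
proof -
  have R0: "ev V k (R_G2T a m) = 0" for k a m
  proof -
    consider "a = 1" | "a = 2" | "a \<notin> {1,2}" by blast
    then show ?thesis
    proof cases
      case 1 then show ?thesis using r1[of "k+m"] by (simp add: R_G2T_def ev_mk)
    next
      case 2 then show ?thesis using r2[of "k+m"] by (simp add: R_G2T_def ev_mk)
    next
      case 3 then show ?thesis by (simp add: R_G2T_def)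
    qed
  qed
  have R: "\<And>a m. a < 100 \<Longrightarrow> ev V k (R_G2T a m) = 0" for k using R0 by simp
  have AP1: "V 1 (j + 12) + V (omega G2 1) j = 0" for j
  proof -
    have "ev V j [(True,1,12),(True,omega G2 1,0)] = 0"
    proof (rule engine[where R="R_G2T" and H="12" and om="omega G2" and kn="[]" and cs="[(False,1,3),(False,1,5),(False,1,7),(False,1,9),(False,2,4),(False,2,8)]"])
      show "\<And>a m. a < 100 \<Longrightarrow> ev V j (R_G2T a m) = 0" by (rule R)
      show "\<And>b j. b \<in> set [] \<Longrightarrow> V b (j + 12) + V (omega G2 b) j = 0" by simp
    qed code_simp+
    then show ?thesis by simp
  qed
  have AP2: "V 2 (j + 12) + V (omega G2 2) j = 0" for j
  proof -
    have "ev V j [(True,2,12),(True,omega G2 2,0)] = 0"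
    proof (rule engine[where R="R_G2T" and H="12" and om="omega G2" and kn="[1]" and cs="[(True,1,0),(True,1,12),(False,101,(-3)),(False,101,3)]"])
      show "\<And>a m. a < 100 \<Longrightarrow> ev V j (R_G2T a m) = 0" by (rule R)
      show "\<And>b j. b \<in> set [1] \<Longrightarrow> V b (j + 12) + V (omega G2 b) j = 0" using AP1 by auto
    qed code_simp+
    then show ?thesis by simp
  qed
  show ?thesis
  proof (intro ballI allI)
    fix a j assume "a \<in> {1..2::nat}"
    then have "a = 1 \<or> a = 2" by auto
    then show "V a (j + 12) = - V (omega G2 a) j"
      using AP1 AP2 by (auto simp: eq_neg_iff_add_eq_0)
  qed
qed

definition R_G2Y :: "nat \<Rightarrow> int \<Rightarrow> (bool \<times> nat \<times> int) list" where
  "R_G2Y a m = (if a = 1 then mk 3 1 [(2,(-2)),(2,0),(2,2)] m else if a = 2 then mk 1 2 [(1,0)] m else [])"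

lemma AP_G2Y:
  fixes V :: "nat \<Rightarrow> int \<Rightarrow> 'g::ab_group_add"
  assumes r1: "\<And>k. V 1 (k - 3) + V 1 (k + 3) = V 2 (k - 2) + (V 2 k + (V 2 (k + 2)))"
  and r2: "\<And>k. V 2 (k - 1) + V 2 (k + 1) = V 1 k"
  shows "\<forall>a\<in>{1..2}. \<forall>j. V a (j + 12) = - V (omega G2 a) j"
proof -
  have R0: "ev V k (R_G2Y a m) = 0" for k a m
  proof -
    consider "a = 1" | "a = 2" | "a \<notin> {1,2}" by blast
    then show ?thesis
    proof cases
      case 1 then show ?thesis using r1[of "k+m"] by (simp add: R_G2Y_def ev_mk)
    next
      case 2 then show ?thesis using r2[of "k+m"] by (simp add: R_G2Y_def ev_mk)
    next
      case 3 then show ?thesis by (simp add: R_G2Y_def)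
    qed
  qed
  have R: "\<And>a m. a < 100 \<Longrightarrow> ev V k (R_G2Y a m) = 0" for k using R0 by simp
  have AP2: "V 2 (j + 12) + V (omega G2 2) j = 0" for j
  proof -
    have "ev V j [(True,2,12),(True,omega G2 2,0)] = 0"
    proof (rule engine[where R="R_G2Y" and H="12" and om="omega G2" and kn="[]" and cs="[(False,1,4),(False,1,8),(False,2,1),(False,2,5),(False,2,7),(False,2,11)]"])
      show "\<And>a m. a < 100 \<Longrightarrow> ev V j (R_G2Y a m) = 0" by (rule R)
      show "\<And>b j. b \<in> set [] \<Longrightarrow> V b (j + 12) + V (omega G2 b) j = 0" by simp
    qed code_simp+
    then show ?thesis by simp
  qed
  have AP1: "V 1 (j + 12) + V (omega G2 1) j = 0" for j
  proof -
    have "ev V j [(True,1,12),(True,omega G2 1,0)] = 0"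
    proof (rule engine[where R="R_G2Y" and H="12" and om="omega G2" and kn="[2]" and cs="[(True,2,0),(True,2,12),(False,102,(-1)),(False,102,1)]"])
      show "\<And>a m. a < 100 \<Longrightarrow> ev V j (R_G2Y a m) = 0" by (rule R)
      show "\<And>b j. b \<in> set [2] \<Longrightarrow> V b (j + 12) + V (omega G2 b) j = 0" using AP2 by auto
    qed code_simp+
    then show ?thesis by simp
  qed
  show ?thesis
  proof (intro ballI allI)
    fix a j assume "a \<in> {1..2::nat}"
    then have "a = 1 \<or> a = 2" by auto
    then show "V a (j + 12) = - V (omega G2 a) j"
      using AP1 AP2 by (auto simp: eq_neg_iff_add_eq_0)
  qed
qed


lemma adjA: "adj (A r) a b \<longleftrightarrow> (b = a + 1 \<and> 1 \<le> a \<and> a + 1 \<le> r) \<or> (a = b + 1 \<and> 1 \<le> b \<and> b + 1 \<le> r)"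
  by (auto simp: adj_def)

lemma fam_A:
  fixes V :: "nat \<Rightarrow> int \<Rightarrow> 'g::ab_group_add"
  assumes r: "r \<ge> 1"
  and sl: "\<forall>a\<in>Iset (A r). \<forall>k. V a (k-1) + V a (k+1) = (\<Sum>b\<in>{b\<in>Iset (A r). adj (A r) a b}. V b k)"
  shows "a \<in> Iset (A r) \<Longrightarrow> V a (k + (int r + 1)) = - V (r + 1 - a) k"
proof -
  define U where "U a k = (if 1 \<le> a \<and> a \<le> r then V a k else 0)" for a k
  have U0: "\<And>k. U 0 k = 0" by (simp add: U_def)
  have rel: "U a (k - 1) + U a (k + 1) = U (a-1) k + U (a+1) k" if a: "1 \<le> a" "a \<le> r" for a k
  proof -
    have S: "{b\<in>Iset (A r). adj (A r) a b} = {b \<in> {a-1, a+1}. 1 \<le> b \<and> b \<le> r}"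
      using a by (auto simp: Iset_def adjA)
    have "(\<Sum>b\<in>{b\<in>Iset (A r). adj (A r) a b}. V b k) = (\<Sum>b\<in>{b \<in> {a-1, a+1}. 1 \<le> b \<and> b \<le> r}. U b k)"
      unfolding S by (rule sum.cong) (auto simp: U_def)
    also have "\<dots> = (\<Sum>b\<in>{a-1, a+1}. U b k)"
      by (rule sum.mono_neutral_left) (auto simp: U_def)
    also have "\<dots> = U (a-1) k + U (a+1) k" using a by simp
    finally have "(\<Sum>b\<in>{b\<in>Iset (A r). adj (A r) a b}. V b k) = U (a-1) k + U (a+1) k" .
    moreover have "V a (k-1) + V a (k+1) = (\<Sum>b\<in>{b\<in>Iset (A r). adj (A r) a b}. V b k)"
      using sl a by (auto simp: Iset_def)
    ultimately show ?thesis using a by (simp add: U_def)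
  qed
  note phi = chain_phi[where U=U and n=r and s=1, OF U0 rel]
  note psi = chain_psi[where U=U and n=r and s=1, OF U0 rel]
  have Ur1: "U (r+1) k = 0" for k by (simp add: U_def)
  have per: "U 1 (m + (2 * int r + 2)) = U 1 m" for m
  proof -
    have p: "U (r+1) (m + int r + 1 + 1) = U r (m + int r + 1) + U 1 (m + int r + 1 + 1 * int (r+1))"
      using phi[of "r+1" "m + int r + 1"] r by simp
    have q: "U r (m + int r + 1) = U (r+1) (m + int r) - U 1 (m + int r - 1 * int r)"
      using psi[of r "m + int r"] by simp
    have e: "m + int r + 1 + 1 * int (r+1) = m + (2 * int r + 2)" "m + int r - 1 * int r = m" by simp_all
    show ?thesis using p q Ur1 unfolding e by (simp add: eq_neg_iff_add_eq_0)
  qed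
  have P: "a \<le> r + 1 \<Longrightarrow> U a (k + (int r + 1)) + U (r + 1 - a) k = 0" for a k
  proof (induction a arbitrary: k)
    case 0 then show ?case by (simp add: U_def)
  next
    case (Suc a)
    have a: "a \<le> r" using Suc.prems by simp
    have p: "U (Suc a) (k + int r + 1) = U a (k + int r) + U 1 (k + int r + 1 * int (Suc a))"
      using phi[of "Suc a" "k + int r"] Suc.prems by simp
    have q: "U (r - a) (k - 1 + 1) = U (r - a + 1) (k - 1) - U 1 (k - 1 - 1 * int (r - a))"
      using psi[of "r - a" "k - 1"] a by simp
    have ih: "U a (k - 1 + (int r + 1)) + U (r + 1 - a) (k - 1) = 0"
      using Suc.IH[of "k - 1"] Suc.prems by simp
    have pe: "U 1 (k - 1 - 1 * int (r - a) + (2 * int r + 2)) = U 1 (k - 1 - 1 * int (r - a))" by (rule per)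
    have e: "k - 1 + (int r + 1) = k + int r" "r + 1 - a = r - a + 1" "k - 1 + 1 = k"
      "r + 1 - Suc a = r - a" "k + int r + 1 = k + (int r + 1)"
      "k - 1 - 1 * int (r - a) + (2 * int r + 2) = k + int r + 1 * int (Suc a)"
      using a by (simp_all add: of_nat_diff)
    define F where "F = U 1 (k - 1 - 1 * int (r - a))"
    have p': "U (Suc a) (k + (int r + 1)) = U a (k + int r) + F"
      using p pe unfolding e F_def by simp
    have q': "U (r - a) k = U (r - a + 1) (k - 1) - F"
      using q unfolding e F_def by simp
    have "U (Suc a) (k + (int r + 1)) + U (r + 1 - Suc a) k = (U a (k + int r) + F) + (U (r - a + 1) (k - 1) - F)"
      using p' q' unfolding e by simp
    also have "\<dots> = U a (k + int r) + U (r - a + 1) (k - 1)" by (simp add: algebra_simps)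
    also have "\<dots> = 0" using ih unfolding e .
    finally show ?case .
  qed
  assume "a \<in> Iset (A r)"
  then have a: "1 \<le> a" "a \<le> r" by (auto simp: Iset_def)
  have c: "1 \<le> r + 1 - a" "r + 1 - a \<le> r" using a by auto
  from P[of a k] a c show "V a (k + (int r + 1)) = - V (r + 1 - a) k"
    unfolding U_def eq_neg_iff_add_eq_0 by (simp only: if_True simp_thms)
qed


lemma adjD: "adj (D r) a b \<longleftrightarrow> (b = a + 1 \<and> 1 \<le> a \<and> a + 1 \<le> r - 1) \<or> (a = b + 1 \<and> 1 \<le> b \<and> b + 1 \<le> r - 1)
   \<or> (a = r - 2 \<and> b = r) \<or> (b = r - 2 \<and> a = r)"
  by (auto simp: adj_def)

lemma spin:
  fixes g g' f :: "int \<Rightarrow> 'g::ab_group_add" and U :: "nat \<Rightarrow> int \<Rightarrow> 'g"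
  assumes hg: "\<And>k. g (k+2) = g' k + f (k + c)" and hg': "\<And>k. g' (k+2) = g k + f (k + c)"
  and ps: "\<And>m x. m < N \<Longrightarrow> U (Suc m) x = U m (x+1) + f (x - int m)"
  and U0: "\<And>x. U 0 x = 0"
  shows "m \<le> N \<Longrightarrow> g (k + 2 * int m) = (if even m then g k else g' k) + U m (k + c + int m - 1)"
proof (induction m arbitrary: k)
  case 0 then show ?case by (simp add: U0)
next
  case (Suc m)
  have IH: "g (k + 2 + 2 * int m) = (if even m then g (k+2) else g' (k+2)) + U m (k + 2 + c + int m - 1)"
    using Suc.IH[of "k+2"] Suc.prems by simp
  have P: "U (Suc m) (k + c + int m) = U m (k + c + int m + 1) + f (k + c + int m - int m)"
    using ps[of m "k + c + int m"] Suc.prems by simp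
  have e: "k + 2 + 2 * int m = k + 2 * int (Suc m)" "k + 2 + c + int m - 1 = k + c + int m + 1"
    "k + c + int m - int m = k + c" "k + c + int (Suc m) - 1 = k + c + int m" by simp_all
  show ?case
  proof (cases "even m")
    case True
    have "g (k + 2 * int (Suc m)) = (g' k + f (k + c)) + U m (k + c + int m + 1)"
      using IH True hg[of k] unfolding e by simp
    also have "\<dots> = g' k + U (Suc m) (k + c + int m)" using P unfolding e by (simp add: algebra_simps)
    finally show ?thesis using True unfolding e by simp
  next
    case False
    have "g (k + 2 * int (Suc m)) = (g k + f (k + c)) + U m (k + c + int m + 1)"
      using IH False hg'[of k] unfolding e by simp
    also have "\<dots> = g k + U (Suc m) (k + c + int m)" using P unfolding e by (simp add: algebra_simps)
    finally show ?thesis using False unfolding e by simp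
  qed
qed

lemma fam_D:
  fixes V :: "nat \<Rightarrow> int \<Rightarrow> 'g::ab_group_add"
  assumes r: "r \<ge> 4"
  and sl: "\<forall>a\<in>Iset (D r). \<forall>k. V a (k-1) + V a (k+1) = (\<Sum>b\<in>{b\<in>Iset (D r). adj (D r) a b}. V b k)"
  shows "a \<in> Iset (D r) \<Longrightarrow> V a (k + (2 * int r - 2)) = - V (omega (D r) a) k"
proof -
  have slx: "V a (k-1) + V a (k+1) = (\<Sum>b\<in>{b\<in>Iset (D r). adj (D r) a b}. V b k)" if "1 \<le> a" "a \<le> r" for a k
    using sl that by (auto simp: Iset_def)
  define U where "U a k = (if a = 0 then 0 else if a \<le> r - 2 then V a k else if a = r - 1 then V (r-1) k + V r k else 0)" for a k
  have U0: "\<And>k. U 0 k = 0" by (simp add: U_def)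
  have relc: "V a (k - 1) + V a (k + 1) = U (a-1) k + U (a+1) k" if a: "1 \<le> a" "a \<le> r - 3" for a k
  proof -
    have S: "{b\<in>Iset (D r). adj (D r) a b} = {b \<in> {a-1, a+1}. 1 \<le> b}"
      using a r by (auto simp: Iset_def adjD)
    have "(\<Sum>b\<in>{b\<in>Iset (D r). adj (D r) a b}. V b k) = (\<Sum>b\<in>{b \<in> {a-1, a+1}. 1 \<le> b}. U b k)"
      unfolding S by (rule sum.cong) (use a r in \<open>auto simp: U_def\<close>)
    also have "\<dots> = (\<Sum>b\<in>{a-1, a+1}. U b k)"
      by (rule sum.mono_neutral_left) (auto simp: U_def)
    also have "\<dots> = U (a-1) k + U (a+1) k" using a by simp
    finally show ?thesis using slx[of a k] a r by simp
  qed
  have relm: "V (r-2) (k - 1) + V (r-2) (k + 1) = V (r-3) k + (V (r-1) k + V r k)" for k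
  proof -
    have S: "{b\<in>Iset (D r). adj (D r) (r-2) b} = {r-3, r-1, r}"
      using r by (auto simp: Iset_def adjD)
    have n1: "r - 3 \<notin> {r - 1, r}" "r - 1 \<noteq> r" using r by auto
    have "(\<Sum>b\<in>{r-3, r-1, r}. V b k) = V (r-3) k + (V (r-1) k + V r k)"
      using n1 by (simp add: sum.insert)
    then show ?thesis using slx[of "r-2" k] r unfolding S by simp
  qed
  have rels1: "V (r-1) (k - 1) + V (r-1) (k + 1) = V (r-2) k" for k
  proof -
    have S: "{b\<in>Iset (D r). adj (D r) (r-1) b} = {r-2}"
      using r by (auto simp: Iset_def adjD)
    show ?thesis using slx[of "r-1" k] r unfolding S by simp
  qed
  have rels2: "V r (k - 1) + V r (k + 1) = V (r-2) k" for k
  proof -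
    have S: "{b\<in>Iset (D r). adj (D r) r b} = {r-2}"
      using r by (auto simp: Iset_def adjD)
    show ?thesis using slx[of "r" k] r unfolding S by simp
  qed
  have rel: "U a (k - 1) + U a (k + 1) = U (a-1) k + U (a+1) k" if a: "1 \<le> a" "a \<le> r - 2" for a k
  proof (cases "a \<le> r - 3")
    case True
    then show ?thesis using relc[OF a(1) True, of k] a by (simp add: U_def)
  next
    case False
    then have "a = r - 2" using a by simp
    have u: "U (r-2-1) k = V (r-3) k" "U (r-2+1) k = V (r-1) k + V r k" "U (r-2) x = V (r-2) x" for x
      using r by (auto simp: U_def numeral_eq_Suc)
    show ?thesis unfolding \<open>a = r - 2\<close> u using relm[of k] by (simp add: add.assoc)
  qed
  note phi = chain_phi[where U=U and n="r-2" and s=1, OF U0 rel]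
  note psi = chain_psi[where U=U and n="r-2" and s=1, OF U0 rel]
  define f where "f = U 1"
  have u1: "U (r-1) x = V (r-1) x + V r x" for x using r by (simp add: U_def; arith)
  have u2: "U (r-2) x = V (r-2) x" for x using r by (simp add: U_def)
  have ap: "U 1 (m + (2 * int r - 2)) = - U 1 m" for m
  proof -
    define k where "k = m + int r - 1"
    have p: "U (r-1) (k+1) = U (r-1-1) k + U 1 (k + 1 * int (r-1))"
      using phi[of "r-1" k] r by simp
    have q: "U (r-2) (k - 1 + 1) = U (r-2+1) (k-1) - U 1 (k - 1 - 1 * int (r-2))"
      using psi[of "r-2" "k-1"] r by simp
    have e: "r - 1 - 1 = r - 2" "r - 2 + 1 = r - 1" "k - 1 + 1 = k"
      "k + 1 * int (r-1) = m + (2 * int r - 2)" "k - 1 - 1 * int (r-2) = m"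
      using r by (simp_all add: k_def of_nat_diff)
    have "(V (r-1) (k - 1) + V (r-1) (k + 1)) + (V r (k - 1) + V r (k + 1)) = V (r-2) k + V (r-2) k"
      using rels1[of k] rels2[of k] by simp
    moreover have "(V (r-1) (k - 1) + V (r-1) (k + 1)) + (V r (k - 1) + V r (k + 1)) = U (r-1) (k+1) + U (r-1) (k - 1)"
      using u1 by (simp add: algebra_simps)
    moreover have "U (r-1) (k+1) = V (r-2) k + U 1 (m + (2 * int r - 2))" using p u2 unfolding e by simp
    moreover have "U (r-1) (k-1) = V (r-2) k + U 1 m" using q u2 unfolding e by (simp add: algebra_simps)
    ultimately have "V (r-2) k + V (r-2) k = (V (r-2) k + V (r-2) k) + (U 1 (m + (2 * int r - 2)) + U 1 m)"
      by (simp add: algebra_simps)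
    then show ?thesis by (simp add: eq_neg_iff_add_eq_0)
  qed
  have AP: "a \<le> r - 1 \<Longrightarrow> U a (m + (2 * int r - 2)) = - U a m" for a m
    using chain_AP[where U=U and n="r-2" and s=1 and H="2 * int r - 2", OF U0 rel ap, of a m] r by simp
  have ps: "U (Suc m) x = U m (x+1) + f (x - int m)" if "m < r - 1" for m x
    using psi[of m x] that unfolding f_def by simp
  have hg: "V (r-1) (k+2) = V r k + f (k + int r)" for k
  proof -
    have p: "U (r-1) (k+1+1) = U (r-1-1) (k+1) + U 1 (k + 1 + 1 * int (r-1))"
      using phi[of "r-1" "k+1"] r by simp
    have e: "r - 1 - 1 = r - 2" "k + 1 + 1 * int (r-1) = k + int r" "k + 1 + 1 = k + 2" "k + 1 - 1 = k"
      using r by (simp_all add: of_nat_diff)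
    have "V (r-1) (k+2) + V r (k+2) = V (r-2) (k+1) + f (k + int r)"
      using p unfolding e u1 u2 f_def by simp
    moreover have "V r k + V r (k+2) = V (r-2) (k+1)" using rels2[of "k+1"] unfolding e by simp
    ultimately have A: "V (r-1) (k+2) + V r (k+2) = (V r k + V r (k+2)) + f (k + int r)" by simp
    have "V (r-1) (k+2) = (V (r-1) (k+2) + V r (k+2)) - V r (k+2)" by simp
    also have "\<dots> = ((V r k + V r (k+2)) + f (k + int r)) - V r (k+2)" using A by simp
    also have "\<dots> = V r k + f (k + int r)" by (simp add: algebra_simps)
    finally show ?thesis .
  qed
  have hg': "V r (k+2) = V (r-1) k + f (k + int r)" for k
  proof -
    have p: "U (r-1) (k+1+1) = U (r-1-1) (k+1) + U 1 (k + 1 + 1 * int (r-1))"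
      using phi[of "r-1" "k+1"] r by simp
    have e: "r - 1 - 1 = r - 2" "k + 1 + 1 * int (r-1) = k + int r" "k + 1 + 1 = k + 2" "k + 1 - 1 = k"
      using r by (simp_all add: of_nat_diff)
    have "V (r-1) (k+2) + V r (k+2) = V (r-2) (k+1) + f (k + int r)"
      using p unfolding e u1 u2 f_def by simp
    moreover have "V (r-1) k + V (r-1) (k+2) = V (r-2) (k+1)" using rels1[of "k+1"] unfolding e by simp
    ultimately have A: "V (r-1) (k+2) + V r (k+2) = (V (r-1) k + V (r-1) (k+2)) + f (k + int r)" by simp
    have "V r (k+2) = (V (r-1) (k+2) + V r (k+2)) - V (r-1) (k+2)" by simp
    also have "\<dots> = ((V (r-1) k + V (r-1) (k+2)) + f (k + int r)) - V (r-1) (k+2)" using A by simp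
    also have "\<dots> = V (r-1) k + f (k + int r)" by (simp add: algebra_simps)
    finally show ?thesis .
  qed
  have sp1: "V (r-1) (k + 2 * int (r-1)) = (if even (r-1) then V (r-1) k else V r k) + U (r-1) (k + int r + int (r-1) - 1)" for k
    using spin[where g="V (r-1)" and g'="V r" and f=f and c="int r" and U=U and N="r-1", OF hg hg' ps U0] by simp
  have sp2: "V r (k + 2 * int (r-1)) = (if even (r-1) then V r k else V (r-1) k) + U (r-1) (k + int r + int (r-1) - 1)" for k
    using spin[where g="V r" and g'="V (r-1)" and f=f and c="int r" and U=U and N="r-1", OF hg' hg ps U0] by simp
  have e2: "k + 2 * int (r-1) = k + (2 * int r - 2)" "k + int r + int (r-1) - 1 = k + (2 * int r - 2)" for k
    using r by (simp_all add: of_nat_diff)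
  have Ur: "U (r-1) (k + (2 * int r - 2)) = - (V (r-1) k + V r k)" for k
    using AP[of "r-1" k] r unfolding u1 by simp
  assume a: "a \<in> Iset (D r)"
  then have a1: "1 \<le> a" "a \<le> r" by (auto simp: Iset_def)
  show "V a (k + (2 * int r - 2)) = - V (omega (D r) a) k"
  proof -
    consider "a \<le> r - 2" | "a = r - 1" | "a = r" using a1 by linarith
    then show ?thesis
    proof cases
      case 1
      then have "omega (D r) a = a" using r by auto
      then show ?thesis using AP[of a k] 1 a1 r by (simp add: U_def)
    next
      case 2
      have s1: "V (r-1) (k + (2 * int r - 2)) = (if even (r-1) then V (r-1) k else V r k) + - (V (r-1) k + V r k)"
        using sp1[of k] Ur[of k] unfolding e2 by simp
      show ?thesis
      proof (cases "odd r")
        case True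
        then have ev: "even (r-1)" using r by simp
        have o: "omega (D r) a = r" using 2 True by simp
        have "V (r-1) (k + (2 * int r - 2)) = V (r-1) k + - (V (r-1) k + V r k)" using s1 ev by simp
        also have "\<dots> = - V r k" by (simp add: algebra_simps)
        finally show ?thesis using o 2 by simp
      next
        case False
        then have ev: "\<not> even (r-1)" using r by simp
        have o: "omega (D r) a = a" using 2 False by simp
        have "V (r-1) (k + (2 * int r - 2)) = V r k + - (V (r-1) k + V r k)" using s1 ev by simp
        also have "\<dots> = - V (r-1) k" by (simp add: algebra_simps)
        finally show ?thesis using o 2 by simp
      qed
    next
      case 3
      have s2: "V r (k + (2 * int r - 2)) = (if even (r-1) then V r k else V (r-1) k) + - (V (r-1) k + V r k)"
        using sp2[of k] Ur[of k] unfolding e2 by simp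
      show ?thesis
      proof (cases "odd r")
        case True
        then have ev: "even (r-1)" using r by simp
        have o: "omega (D r) a = r - 1" using 3 True r by simp
        have "V r (k + (2 * int r - 2)) = V r k + - (V (r-1) k + V r k)" using s2 ev by simp
        also have "\<dots> = - V (r-1) k" by (simp add: algebra_simps)
        finally show ?thesis using o 3 by simp
      next
        case False
        then have ev: "\<not> even (r-1)" using r by simp
        have o: "omega (D r) a = a" using 3 False by simp
        have "V r (k + (2 * int r - 2)) = V (r-1) k + - (V (r-1) k + V r k)" using s2 ev by simp
        also have "\<dots> = - V r k" by (simp add: algebra_simps)
        finally show ?thesis using o 3 by simp
      qed
    qed
  qed
qed


lemma fam_BT:
  fixes T :: "nat \<Rightarrow> int \<Rightarrow> 'g::ab_group_add"
  assumes r: "r \<ge> 2"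
  and h: "\<forall>k. (\<forall>a. 1 \<le> a \<and> a \<le> r - 2 \<longrightarrow> T a (k - 2) + T a (k + 2) = z0 T (a - 1) k + T (a + 1) k)
      \<and> T (r - 1) (k - 2) + T (r - 1) (k + 2) = z0 T (r - 2) k + T r k
      \<and> T r (k - 1) + T r (k + 1) = T (r - 1) (k - 1) + T (r - 1) (k + 1)"
  shows "1 \<le> a \<Longrightarrow> a \<le> r \<Longrightarrow> T a (k + 2 * (2 * int r - 1)) = - T a k"
proof -
  define U where "U a k = (if 1 \<le> a \<and> a \<le> r then T a k else 0)" for a k
  have U0: "\<And>k. U 0 k = 0" by (simp add: U_def)
  have Ueq: "1 \<le> b \<Longrightarrow> b \<le> r \<Longrightarrow> U b x = T b x" for b x by (simp add: U_def)
  have z: "z0 T (a - 1) k = U (a - 1) k" if "a \<le> r + 1" for a k using that by (simp add: z0_def U_def; arith)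
  have rel: "U a (k - 2) + U a (k + 2) = U (a-1) k + U (a+1) k" if a: "1 \<le> a" "a \<le> r - 1" for a k
  proof (cases "a \<le> r - 2")
    case True
    have hh: "T a (k - 2) + T a (k + 2) = z0 T (a - 1) k + T (a + 1) k" using h True a by blast
    have uu: "U (a+1) k = T (a+1) k" "U a x = T a x" for x using a True Ueq[of "a+1"] Ueq[of a] by simp_all
    show ?thesis using hh z[of a k] a unfolding uu by simp
  next
    case False
    then have ar: "a = r - 1" using a by simp
    have e2: "r - 1 - 1 = r - 2" "r - 1 + 1 = r" using r by simp_all
    have "T (r - 1) (k - 2) + T (r - 1) (k + 2) = z0 T (r - 2) k + T r k" using h by simp
    moreover have "z0 T (r - 2) k = U (r - 2) k" using z[of "r-1" k] r unfolding e2 by simp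
    moreover have "U (r - 1) x = T (r - 1) x" "U r k = T r k" for x using Ueq[of "r-1"] Ueq[of r] r by simp_all
    ultimately show ?thesis unfolding ar e2 by simp
  qed
  note phi = chain_phi[where U=U and n="r-1" and s=2, OF U0 rel]
  note psi = chain_psi[where U=U and n="r-1" and s=2, OF U0 rel]
  have nr: "T r (k - 1) + T r (k + 1) = T (r - 1) (k - 1) + T (r - 1) (k + 1)" for k using h by simp
  have r1: "1 \<le> r - 1" "r - 1 \<le> r" "1 \<le> r" using r by simp_all
  have ur: "U r x = T r x" "U (r - 1) x = T (r - 1) x" for x using Ueq[OF r1(3) order.refl] Ueq[OF r1(1,2)] by simp_all
  have ap: "U 1 (m + (4 * int r - 2)) = - U 1 m" for m
  proof -
    define k where "k = m + 2 * int r - 1"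
    have p1: "U r (k - 1 + 2) = U (r - 1) (k - 1) + U 1 (k - 1 + 2 * int r)"
      using phi[of r "k - 1"] r by simp
    have p3: "U r (k - 3 + 2) = U (r - 1) (k - 3) + U 1 (k - 3 + 2 * int r)"
      using phi[of r "k - 3"] r by simp
    have q: "U (r - 1) (k - 1 + 2) = U (r - 1 + 1) (k - 1) - U 1 (k - 1 - 2 * int (r - 1))"
      using psi[of "r - 1" "k - 1"] r by simp
    have e: "k - 1 + 2 = k + 1" "k - 3 + 2 = k - 1" "r - 1 + 1 = r"
      "k - 1 + 2 * int r = m + (4 * int r - 2)" "k - 1 - 2 * int (r - 1) = m"
      using r by (simp_all add: k_def of_nat_diff)
    define F1 where "F1 = U 1 (m + (4 * int r - 2))"
    define F3 where "F3 = U 1 (k - 3 + 2 * int r)"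
    define F0 where "F0 = U 1 m"
    have A1: "T r (k + 1) = T (r - 1) (k - 1) + F1" using p1 unfolding e ur F1_def .
    have A3: "T r (k - 1) = T (r - 1) (k - 3) + F3" using p3 unfolding e ur F3_def .
    have A0: "T (r - 1) (k + 1) = T r (k - 1) - F0" using q unfolding e ur F0_def .
    have "(T (r - 1) (k - 3) + F3) + (T (r - 1) (k - 1) + F1) = T (r - 1) (k - 1) + ((T (r - 1) (k - 3) + F3) - F0)"
      using nr[of k] A1 A3 A0 by simp
    then have "(T (r - 1) (k - 3) + F3) + (T (r - 1) (k - 1) + F1) - (T (r - 1) (k - 1) + ((T (r - 1) (k - 3) + F3) - F0)) = 0"
      by simp
    then have "F1 + F0 = 0" by (simp add: algebra_simps)
    then show ?thesis unfolding F1_def F0_def by (simp add: eq_neg_iff_add_eq_0)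
  qed
  have AP: "a \<le> r \<Longrightarrow> U a (m + (4 * int r - 2)) = - U a m" for a m
    using chain_AP[where U=U and n="r-1" and s=2 and H="4 * int r - 2", OF U0 rel ap, of a m] r by simp
  assume a: "1 \<le> a" "a \<le> r"
  have e: "k + 2 * (2 * int r - 1) = k + (4 * int r - 2)" by simp
  show "T a (k + 2 * (2 * int r - 1)) = - T a k" using AP[of a k] a unfolding e by (simp add: U_def)
qed

lemma fam_BY:
  fixes Y :: "nat \<Rightarrow> int \<Rightarrow> 'g::ab_group_add"
  assumes r: "r \<ge> 2"
  and h: "\<forall>k. (\<forall>a. 1 \<le> a \<and> a \<le> r - 2 \<longrightarrow> Y a (k - 2) + Y a (k + 2) = z0 Y (a - 1) k + Y (a + 1) k)
      \<and> Y (r - 1) (k - 2) + Y (r - 1) (k + 2) = z0 Y (r - 2) k + Y r (k - 1) + Y r (k + 1)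
      \<and> Y r (k - 1) + Y r (k + 1) = Y (r - 1) k"
  shows "1 \<le> a \<Longrightarrow> a \<le> r \<Longrightarrow> Y a (k + 2 * (2 * int r - 1)) = - Y a k"
proof -
  define U where "U a k = (if 1 \<le> a \<and> a \<le> r - 1 then Y a k else if a = r then Y (r - 1) k else 0)" for a k
  have U0: "\<And>k. U 0 k = 0" using r by (simp add: U_def)
  have r1: "1 \<le> r - 1" "r - 1 \<le> r" "1 \<le> r" "r - 1 + 1 = r" "r - 1 - 1 = r - 2" "r \<noteq> r - 1" using r by simp_all
  have Ueq: "1 \<le> b \<Longrightarrow> b \<le> r - 1 \<Longrightarrow> U b x = Y b x" for b x by (simp add: U_def)
  have Ur: "U r x = Y (r - 1) x" for x
  proof -
    have c: "(1 \<le> r \<and> r \<le> r - 1) = False" using r by simp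
    show ?thesis unfolding U_def c by simp
  qed
  have Ur1: "U (r - 1) x = Y (r - 1) x" for x using Ueq[OF r1(1) order.refl] .
  have z: "z0 Y (a - 1) k = U (a - 1) k" if "a \<le> r" for a k
  proof (cases "a \<le> 1")
    case True then show ?thesis using r by (simp add: z0_def U_def)
  next
    case False then show ?thesis using that Ueq[of "a - 1" k] by (simp add: z0_def)
  qed
  have rel: "U a (k - 2) + U a (k + 2) = U (a-1) k + U (a+1) k" if a: "1 \<le> a" "a \<le> r - 1" for a k
  proof (cases "a \<le> r - 2")
    case True
    have hh: "Y a (k - 2) + Y a (k + 2) = z0 Y (a - 1) k + Y (a + 1) k" using h True a by blast
    have uu: "U (a+1) k = Y (a+1) k" "U a x = Y a x" for x using a True Ueq[of "a+1"] Ueq[of a] by simp_all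
    show ?thesis using hh z[of a k] a unfolding uu by simp
  next
    case False
    then have ar: "a = r - 1" using a by simp
    have "Y (r - 1) (k - 2) + Y (r - 1) (k + 2) = z0 Y (r - 2) k + Y r (k - 1) + Y r (k + 1)" using h by simp
    moreover have "z0 Y (r - 2) k = U (r - 2) k" using z[of "r-1" k] r unfolding r1 by simp
    moreover have "Y r (k - 1) + Y r (k + 1) = Y (r - 1) k" using h by simp
    ultimately show ?thesis unfolding ar r1 Ur Ur1 by (simp add: add.assoc)
  qed
  note phi = chain_phi[where U=U and n="r-1" and s=2, OF U0 rel]
  note psi = chain_psi[where U=U and n="r-1" and s=2, OF U0 rel]
  have nr: "Y r (k - 1) + Y r (k + 1) = Y (r - 1) k" for k using h by simp
  have ap: "U 1 (m + (4 * int r - 2)) = - U 1 m" for m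
  proof -
    define k where "k = m + 2 * int r - 2"
    have p: "U r (k + 2) = U (r - 1) k + U 1 (k + 2 * int r)"
      using phi[of r k] r by simp
    have q: "U (r - 1) (k + 2) = U (r - 1 + 1) k - U 1 (k - 2 * int (r - 1))"
      using psi[of "r - 1" k] r by simp
    have e: "k + 2 * int r = m + (4 * int r - 2)" "k - 2 * int (r - 1) = m"
      using r by (simp_all add: k_def of_nat_diff)
    have A: "Y (r - 1) (k + 2) = Y (r - 1) k + U 1 (m + (4 * int r - 2))" using p unfolding e Ur Ur1 .
    have B: "Y (r - 1) (k + 2) = Y (r - 1) k - U 1 m" using q unfolding e r1 Ur Ur1 .
    from A B have "Y (r - 1) k + U 1 (m + (4 * int r - 2)) - (Y (r - 1) k - U 1 m) = 0" by simp
    then have "U 1 (m + (4 * int r - 2)) + U 1 m = 0" by (simp add: algebra_simps)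
    then show ?thesis by (simp add: eq_neg_iff_add_eq_0)
  qed
  have AP: "a \<le> r \<Longrightarrow> U a (m + (4 * int r - 2)) = - U a m" for a m
    using chain_AP[where U=U and n="r-1" and s=2 and H="4 * int r - 2", OF U0 rel ap, of a m] r by simp
  have y4: "Y r (k + 4) = Y r k + U 1 (k + 2 * int r + 1)" for k
  proof -
    have p: "U r (k + 1 + 2) = U (r - 1) (k + 1) + U 1 (k + 1 + 2 * int r)"
      using phi[of r "k+1"] r by simp
    have e: "k + 1 + 2 = k + 3" "k + 1 + 2 * int r = k + 2 * int r + 1" "k + 1 - 1 = k" "k + 1 + 1 = k + 2"
      "k + 3 - 1 = k + 2" "k + 3 + 1 = k + 4" by simp_all
    have n1: "Y r k + Y r (k + 2) = Y (r - 1) (k + 1)" using nr[of "k+1"] unfolding e .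
    have n3: "Y r (k + 2) + Y r (k + 4) = Y (r - 1) (k + 3)" using nr[of "k+3"] unfolding e .
    have A: "Y (r - 1) (k + 3) = Y (r - 1) (k + 1) + U 1 (k + 2 * int r + 1)" using p unfolding e Ur Ur1 .
    have "Y r (k + 4) = (Y r (k + 2) + Y r (k + 4)) - Y r (k + 2)" by simp
    also have "\<dots> = (Y r k + Y r (k + 2) + U 1 (k + 2 * int r + 1)) - Y r (k + 2)" using n1 n3 A by simp
    also have "\<dots> = Y r k + U 1 (k + 2 * int r + 1)" by (simp add: algebra_simps)
    finally show ?thesis .
  qed
  have Q: "m \<le> r - 1 \<Longrightarrow> Y r (k + 4 * int m) = Y r k + U m (k + 2 * int r + 2 * int m - 1)" for m k
  proof (induction m arbitrary: k)
    case 0 then show ?case by (simp add: U0)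
  next
    case (Suc m)
    have IH: "Y r (k + 4 + 4 * int m) = Y r (k + 4) + U m (k + 4 + 2 * int r + 2 * int m - 1)"
      using Suc.IH[of "k+4"] Suc.prems by simp
    have P: "U m (k + 2 * int r + 2 * int m + 1 + 2) = U (m + 1) (k + 2 * int r + 2 * int m + 1) - U 1 (k + 2 * int r + 2 * int m + 1 - 2 * int m)"
      using psi[of m "k + 2 * int r + 2 * int m + 1"] Suc.prems by simp
    have e: "k + 4 + 4 * int m = k + 4 * int (Suc m)" "k + 4 + 2 * int r + 2 * int m - 1 = k + 2 * int r + 2 * int m + 1 + 2"
      "k + 2 * int r + 2 * int m + 1 - 2 * int m = k + 2 * int r + 1"
      "k + 2 * int r + 2 * int (Suc m) - 1 = k + 2 * int r + 2 * int m + 1" "m + 1 = Suc m" by simp_all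
    have "Y r (k + 4 * int (Suc m)) = (Y r k + U 1 (k + 2 * int r + 1)) + (U (Suc m) (k + 2 * int r + 2 * int m + 1) - U 1 (k + 2 * int r + 1))"
      using IH y4[of k] P unfolding e by simp
    also have "\<dots> = Y r k + U (Suc m) (k + 2 * int r + 2 * int m + 1)" by (simp add: algebra_simps)
    finally show ?case unfolding e .
  qed
  assume a: "1 \<le> a" "a \<le> r"
  have e: "k + 2 * (2 * int r - 1) = k + (4 * int r - 2)" by simp
  show "Y a (k + 2 * (2 * int r - 1)) = - Y a k"
  proof (cases "a = r")
    case False
    then have "a \<le> r - 1" using a by simp
    then show ?thesis using AP[of a k] a Ueq[of a] unfolding e by simp
  next
    case True
    have q: "Y r (k + 2 + 4 * int (r - 1)) = Y r (k + 2) + U (r - 1) (k + 2 + 2 * int r + 2 * int (r - 1) - 1)"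
      using Q[of "r - 1" "k + 2"] by simp
    have e2: "k + 2 + 4 * int (r - 1) = k + (4 * int r - 2)" "k + 2 + 2 * int r + 2 * int (r - 1) - 1 = (k + 1) + (4 * int r - 2)"
      "k + 1 - 1 = k" "k + 1 + 1 = k + 2"
      using r by (simp_all add: of_nat_diff)
    have n: "Y r k + Y r (k + 2) = Y (r - 1) (k + 1)" using nr[of "k+1"] unfolding e2 .
    have u: "U (r - 1) ((k + 1) + (4 * int r - 2)) = - Y (r - 1) (k + 1)" using AP[of "r - 1" "k + 1"] unfolding Ur1 by simp
    have "Y r (k + (4 * int r - 2)) = Y r (k + 2) + - Y (r - 1) (k + 1)" using q u unfolding e2 by simp
    also have "\<dots> = Y r (k + 2) + - (Y r k + Y r (k + 2))" using n by simp
    also have "\<dots> = - Y r k" by (simp add: algebra_simps)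
    finally show ?thesis unfolding e True .
  qed
qed

lemma fam_CY:
  fixes Y :: "nat \<Rightarrow> int \<Rightarrow> 'g::ab_group_add"
  assumes r: "r \<ge> 2"
  and h: "\<forall>k. (\<forall>a. 1 \<le> a \<and> a \<le> r - 2 \<longrightarrow> Y a (k - 1) + Y a (k + 1) = z0 Y (a - 1) k + Y (a + 1) k)
      \<and> Y (r - 1) (k - 1) + Y (r - 1) (k + 1) = z0 Y (r - 2) k + Y r k
      \<and> Y r (k - 2) + Y r (k + 2) = Y (r - 1) (k - 1) + Y (r - 1) (k + 1)"
  shows "1 \<le> a \<Longrightarrow> a \<le> r \<Longrightarrow> Y a (k + 2 * (int r + 1)) = - Y a k"
proof -
  define U where "U a k = (if 1 \<le> a \<and> a \<le> r then Y a k else 0)" for a k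
  have U0: "\<And>k. U 0 k = 0" by (simp add: U_def)
  have Ueq: "1 \<le> b \<Longrightarrow> b \<le> r \<Longrightarrow> U b x = Y b x" for b x by (simp add: U_def)
  have r1: "1 \<le> r - 1" "r - 1 \<le> r" "1 \<le> r" "r - 1 + 1 = r" "r - 1 - 1 = r - 2" using r by simp_all
  have ur: "U r x = Y r x" "U (r - 1) x = Y (r - 1) x" for x using Ueq[OF r1(3) order.refl] Ueq[OF r1(1,2)] by simp_all
  have z: "z0 Y (a - 1) k = U (a - 1) k" if "a \<le> r + 1" for a k
  proof (cases "a \<le> 1")
    case True then show ?thesis by (simp add: z0_def U_def)
  next
    case False then show ?thesis using that Ueq[of "a - 1" k] by (simp add: z0_def)
  qed
  have rel: "U a (k - 1) + U a (k + 1) = U (a-1) k + U (a+1) k" if a: "1 \<le> a" "a \<le> r - 1" for a k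
  proof (cases "a \<le> r - 2")
    case True
    have hh: "Y a (k - 1) + Y a (k + 1) = z0 Y (a - 1) k + Y (a + 1) k" using h True a by blast
    have uu: "U (a+1) k = Y (a+1) k" "U a x = Y a x" for x using a True Ueq[of "a+1"] Ueq[of a] by simp_all
    show ?thesis using hh z[of a k] a unfolding uu by simp
  next
    case False
    then have ar: "a = r - 1" using a by simp
    have "Y (r - 1) (k - 1) + Y (r - 1) (k + 1) = z0 Y (r - 2) k + Y r k" using h by simp
    moreover have "z0 Y (r - 2) k = U (r - 2) k" using z[of "r-1" k] r unfolding r1 by simp
    ultimately show ?thesis unfolding ar r1 ur by simp
  qed
  note phi = chain_phi[where U=U and n="r-1" and s=1, OF U0 rel]
  note psi = chain_psi[where U=U and n="r-1" and s=1, OF U0 rel]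
  have nr: "Y r (k - 2) + Y r (k + 2) = Y (r - 1) (k - 1) + Y (r - 1) (k + 1)" for k using h by simp
  have ap: "U 1 (m + (2 * int r + 2)) = - U 1 m" for m
  proof -
    define k where "k = m + int r + 1"
    have p: "U r (k + 1 + 1) = U (r - 1) (k + 1) + U 1 (k + 1 + 1 * int r)"
      using phi[of r "k+1"] r by simp
    have q: "U (r - 1) (k - 2 + 1) = U (r - 1 + 1) (k - 2) - U 1 (k - 2 - 1 * int (r - 1))"
      using psi[of "r - 1" "k - 2"] r by simp
    have e: "k + 1 + 1 = k + 2" "k + 1 + 1 * int r = m + (2 * int r + 2)" "k - 2 + 1 = k - 1"
      "k - 2 - 1 * int (r - 1) = m"
      using r by (simp_all add: k_def of_nat_diff)
    have A: "Y r (k + 2) = Y (r - 1) (k + 1) + U 1 (m + (2 * int r + 2))" using p unfolding e ur .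
    have B: "Y (r - 1) (k - 1) = Y r (k - 2) - U 1 m" using q unfolding e r1 ur .
    have "Y r (k - 2) + (Y (r - 1) (k + 1) + U 1 (m + (2 * int r + 2))) = (Y r (k - 2) - U 1 m) + Y (r - 1) (k + 1)"
      using nr[of k] A B by simp
    then have "Y r (k - 2) + (Y (r - 1) (k + 1) + U 1 (m + (2 * int r + 2))) - ((Y r (k - 2) - U 1 m) + Y (r - 1) (k + 1)) = 0"
      by simp
    then have "U 1 (m + (2 * int r + 2)) + U 1 m = 0" by (simp add: algebra_simps)
    then show ?thesis by (simp add: eq_neg_iff_add_eq_0)
  qed
  have AP: "a \<le> r \<Longrightarrow> U a (m + (2 * int r + 2)) = - U a m" for a m
    using chain_AP[where U=U and n="r-1" and s=1 and H="2 * int r + 2", OF U0 rel ap, of a m] r by simp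
  assume a: "1 \<le> a" "a \<le> r"
  have e: "k + 2 * (int r + 1) = k + (2 * int r + 2)" by simp
  show "Y a (k + 2 * (int r + 1)) = - Y a k" using AP[of a k] a Ueq[of a] unfolding e by simp
qed

lemma fam_CT:
  fixes T :: "nat \<Rightarrow> int \<Rightarrow> 'g::ab_group_add"
  assumes r: "r \<ge> 2"
  and h: "\<forall>k. (\<forall>a. 1 \<le> a \<and> a \<le> r - 2 \<longrightarrow> T a (k - 1) + T a (k + 1) = z0 T (a - 1) k + T (a + 1) k)
      \<and> T (r - 1) (k - 1) + T (r - 1) (k + 1) = z0 T (r - 2) k + T r (k - 1) + T r (k + 1)
      \<and> T r (k - 2) + T r (k + 2) = T (r - 1) k"
  shows "1 \<le> a \<Longrightarrow> a \<le> r \<Longrightarrow> T a (k + 2 * (int r + 1)) = - T a k"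
proof -
  define U where "U a k = (if 1 \<le> a \<and> a \<le> r - 1 then T a k else if a = r then T r (k - 1) + T r (k + 1) else 0)" for a k
  have U0: "\<And>k. U 0 k = 0" using r by (simp add: U_def)
  have r1: "1 \<le> r - 1" "r - 1 \<le> r" "1 \<le> r" "r - 1 + 1 = r" "r - 1 - 1 = r - 2" "r \<noteq> r - 1" using r by simp_all
  have Ueq: "1 \<le> b \<Longrightarrow> b \<le> r - 1 \<Longrightarrow> U b x = T b x" for b x by (simp add: U_def)
  have Ur: "U r x = T r (x - 1) + T r (x + 1)" for x
  proof -
    have c: "(1 \<le> r \<and> r \<le> r - 1) = False" using r by simp
    show ?thesis unfolding U_def c by simp
  qed
  have Ur1: "U (r - 1) x = T (r - 1) x" for x using Ueq[OF r1(1) order.refl] .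
  have z: "z0 T (a - 1) k = U (a - 1) k" if "a \<le> r" for a k
  proof (cases "a \<le> 1")
    case True then show ?thesis using r by (simp add: z0_def U_def)
  next
    case False then show ?thesis using that Ueq[of "a - 1" k] by (simp add: z0_def)
  qed
  have rel: "U a (k - 1) + U a (k + 1) = U (a-1) k + U (a+1) k" if a: "1 \<le> a" "a \<le> r - 1" for a k
  proof (cases "a \<le> r - 2")
    case True
    have hh: "T a (k - 1) + T a (k + 1) = z0 T (a - 1) k + T (a + 1) k" using h True a by blast
    have uu: "U (a+1) k = T (a+1) k" "U a x = T a x" for x using a True Ueq[of "a+1"] Ueq[of a] by simp_all
    show ?thesis using hh z[of a k] a unfolding uu by simp
  next
    case False
    then have ar: "a = r - 1" using a by simp
    have "T (r - 1) (k - 1) + T (r - 1) (k + 1) = z0 T (r - 2) k + T r (k - 1) + T r (k + 1)" using h by simp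
    moreover have "z0 T (r - 2) k = U (r - 2) k" using z[of "r-1" k] r unfolding r1 by simp
    ultimately show ?thesis unfolding ar r1 Ur Ur1 by (simp add: add.assoc)
  qed
  note phi = chain_phi[where U=U and n="r-1" and s=1, OF U0 rel]
  note psi = chain_psi[where U=U and n="r-1" and s=1, OF U0 rel]
  have nr: "T r (k - 2) + T r (k + 2) = T (r - 1) k" for k using h by simp
  define f where "f = U 1"
  have zA: "T r (x + 2) = T r x + f (x + int r + 2)" for x
  proof -
    have p: "U r (x + 2 + 1) = U (r - 1) (x + 2) + U 1 (x + 2 + 1 * int r)"
      using phi[of r "x + 2"] r by simp
    have e: "x + 2 + 1 - 1 = x + 2" "x + 2 + 1 + 1 = x + 4" "x + 2 + 1 * int r = x + int r + 2" "x + 2 - 2 = x" "x + 2 + 2 = x + 4"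
      by simp_all
    have A: "T r (x + 2) + T r (x + 4) = T (r - 1) (x + 2) + f (x + int r + 2)" using p unfolding Ur Ur1 e f_def .
    have B: "T r x + T r (x + 4) = T (r - 1) (x + 2)" using nr[of "x + 2"] unfolding e .
    have "T r (x + 2) = (T r (x + 2) + T r (x + 4)) - T r (x + 4)" by simp
    also have "\<dots> = (T r x + T r (x + 4) + f (x + int r + 2)) - T r (x + 4)" using A B by simp
    also have "\<dots> = T r x + f (x + int r + 2)" by (simp add: algebra_simps)
    finally show ?thesis .
  qed
  have ap: "U 1 (m + (2 * int r + 2)) = - U 1 m" for m
  proof -
    define k where "k = m + int r - 1"
    have q: "U (r - 1) (k + 1) = U (r - 1 + 1) k - U 1 (k - 1 * int (r - 1))"
      using psi[of "r - 1" k] r by simp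
    have e: "k - 1 * int (r - 1) = m" "k + 1 - 2 = k - 1" "k + 1 + 2 = k + 3" "k + 1 + int r + 2 = m + (2 * int r + 2)"
      using r by (simp_all add: k_def of_nat_diff)
    have A: "T (r - 1) (k + 1) = T r (k - 1) + T r (k + 1) - U 1 m" using q unfolding e r1 Ur Ur1 .
    have B: "T r (k - 1) + T r (k + 3) = T (r - 1) (k + 1)" using nr[of "k + 1"] unfolding e .
    have C: "T r (k + 3) = T r (k + 1) + U 1 (m + (2 * int r + 2))"
    proof -
      have "k + 1 + 2 = k + 3" by simp
      then show ?thesis using zA[of "k + 1"] unfolding f_def e by simp
    qed
    have "T r (k - 1) + (T r (k + 1) + U 1 (m + (2 * int r + 2))) = T r (k - 1) + T r (k + 1) - U 1 m"
      using A B C by simp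
    then have "T r (k - 1) + (T r (k + 1) + U 1 (m + (2 * int r + 2))) - (T r (k - 1) + T r (k + 1) - U 1 m) = 0" by simp
    then have "U 1 (m + (2 * int r + 2)) + U 1 m = 0" by (simp add: algebra_simps)
    then show ?thesis by (simp add: eq_neg_iff_add_eq_0)
  qed
  have AP: "a \<le> r \<Longrightarrow> U a (m + (2 * int r + 2)) = - U a m" for a m
    using chain_AP[where U=U and n="r-1" and s=1 and H="2 * int r + 2", OF U0 rel ap, of a m] r by simp
  have Q: "m \<le> r \<Longrightarrow> T r (k + 2 * int m) = T r k + U m (k + int r + int m + 1)" for m k
  proof (induction m arbitrary: k)
    case 0 then show ?case by (simp add: U0)
  next
    case (Suc m)
    have IH: "T r (k + 2 + 2 * int m) = T r (k + 2) + U m (k + 2 + int r + int m + 1)"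
      using Suc.IH[of "k+2"] Suc.prems by simp
    have P: "U m (k + int r + int m + 2 + 1) = U (m + 1) (k + int r + int m + 2) - U 1 (k + int r + int m + 2 - 1 * int m)"
      using psi[of m "k + int r + int m + 2"] Suc.prems by simp
    have e: "k + 2 + 2 * int m = k + 2 * int (Suc m)" "k + 2 + int r + int m + 1 = k + int r + int m + 2 + 1"
      "k + int r + int m + 2 - 1 * int m = k + int r + 2"
      "k + int r + int (Suc m) + 1 = k + int r + int m + 2" "m + 1 = Suc m" by simp_all
    have "T r (k + 2 * int (Suc m)) = (T r k + f (k + int r + 2)) + (U (Suc m) (k + int r + int m + 2) - f (k + int r + 2))"
      using IH zA[of k] P unfolding e f_def by simp
    also have "\<dots> = T r k + U (Suc m) (k + int r + int m + 2)" by (simp add: algebra_simps)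
    finally show ?case unfolding e .
  qed
  assume a: "1 \<le> a" "a \<le> r"
  have e: "k + 2 * (int r + 1) = k + (2 * int r + 2)" by simp
  show "T a (k + 2 * (int r + 1)) = - T a k"
  proof (cases "a = r")
    case False
    then have "a \<le> r - 1" using a by simp
    then show ?thesis using AP[of a k] a Ueq[of a] unfolding e by simp
  next
    case True
    have q: "T r (k + 2 * int r) = T r k + U r (k + int r + int r + 1)" using Q[of r k] by simp
    have e2: "k + int r + int r + 1 = (k - 1) + (2 * int r + 2)" "k - 1 - 1 = k - 2" "k - 1 + 1 = k"
      "k + 2 * int r + int r + 2 = (k + int r) + (2 * int r + 2)" "k + (2 * int r + 2) = k + 2 * int r + 2"
      "k - 2 + int r + 2 = k + int r" "k - 2 + 2 = k" by simp_all
    have u: "U r (k + int r + int r + 1) = - (T r (k - 2) + T r k)" using AP[of r "k - 1"] unfolding Ur e2 by simp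
    have f1: "f (k + 2 * int r + int r + 2) = - f (k + int r)" using ap[of "k + int r"] unfolding e2 f_def .
    have z2: "T r k = T r (k - 2) + f (k + int r)" using zA[of "k - 2"] unfolding e2 .
    have "T r (k + (2 * int r + 2)) = T r (k + 2 * int r) + f (k + 2 * int r + int r + 2)" using zA[of "k + 2 * int r"] unfolding e2 .
    also have "\<dots> = T r k + - (T r (k - 2) + T r k) + - f (k + int r)" using q u f1 by simp
    also have "\<dots> = - (T r (k - 2) + f (k + int r))" by (simp add: algebra_simps)
    also have "\<dots> = - T r k" using z2 by simp
    finally show ?thesis unfolding e True .
  qed
qed


lemma slE:
  fixes V :: "nat \<Rightarrow> int \<Rightarrow> 'g::ab_group_add"
  assumes "\<forall>a\<in>Iset X. \<forall>k. V a (k - 1) + V a (k + 1) = (\<Sum>b\<in>{b\<in>Iset X. adj X a b}. V b k)"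
  and "a \<in> Iset X" and "{b\<in>Iset X. adj X a b} = set bs" and "distinct bs"
  shows "V a (k - 1) + V a (k + 1) = sum_list (map (\<lambda>b. V b k) bs)"
  using assms by (simp add: sum.distinct_set_conv_list)

lemma anti_E6:
  fixes V :: "nat \<Rightarrow> int \<Rightarrow> 'g::ab_group_add"
  assumes sl: "\<forall>a\<in>Iset E6. \<forall>k. V a (k - 1) + V a (k + 1) = (\<Sum>b\<in>{b\<in>Iset E6. adj E6 a b}. V b k)"
  shows "\<forall>a\<in>Iset E6. \<forall>k. V a (k + tnum E6 * hdual E6) = - V (omega E6 a) k"
proof -
  have r1: "V 1 (k - 1) + V 1 (k + 1) = V 2 k" for k
  proof -
    have "{b\<in>Iset E6. adj E6 1 b} = set [2]" by (auto simp: Iset_def adj_def)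
    from slE[OF sl _ this] show ?thesis by (simp add: Iset_def add.assoc)
  qed
  have r2: "V 2 (k - 1) + V 2 (k + 1) = V 1 k + (V 3 k)" for k
  proof -
    have "{b\<in>Iset E6. adj E6 2 b} = set [1,3]" by (auto simp: Iset_def adj_def)
    from slE[OF sl _ this] show ?thesis by (simp add: Iset_def add.assoc)
  qed
  have r3: "V 3 (k - 1) + V 3 (k + 1) = V 2 k + (V 4 k + (V 5 k))" for k
  proof -
    have "{b\<in>Iset E6. adj E6 3 b} = set [2,4,5]" by (auto simp: Iset_def adj_def)
    from slE[OF sl _ this] show ?thesis by (simp add: Iset_def add.assoc)
  qed
  have r4: "V 4 (k - 1) + V 4 (k + 1) = V 3 k" for k
  proof -
    have "{b\<in>Iset E6. adj E6 4 b} = set [3]" by (auto simp: Iset_def adj_def)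
    from slE[OF sl _ this] show ?thesis by (simp add: Iset_def add.assoc)
  qed
  have r5: "V 5 (k - 1) + V 5 (k + 1) = V 3 k + (V 6 k)" for k
  proof -
    have "{b\<in>Iset E6. adj E6 5 b} = set [3,6]" by (auto simp: Iset_def adj_def)
    from slE[OF sl _ this] show ?thesis by (simp add: Iset_def add.assoc)
  qed
  have r6: "V 6 (k - 1) + V 6 (k + 1) = V 5 k" for k
  proof -
    have "{b\<in>Iset E6. adj E6 6 b} = set [5]" by (auto simp: Iset_def adj_def)
    from slE[OF sl _ this] show ?thesis by (simp add: Iset_def add.assoc)
  qed
  have "\<forall>a\<in>{1..6}. \<forall>j. V a (j + 12) = - V (omega E6 a) j"
    by (rule AP_E6[OF r1 r2 r3 r4 r5 r6])
  then show ?thesis by (simp add: Iset_def)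
qed

lemma anti_E7:
  fixes V :: "nat \<Rightarrow> int \<Rightarrow> 'g::ab_group_add"
  assumes sl: "\<forall>a\<in>Iset E7. \<forall>k. V a (k - 1) + V a (k + 1) = (\<Sum>b\<in>{b\<in>Iset E7. adj E7 a b}. V b k)"
  shows "\<forall>a\<in>Iset E7. \<forall>k. V a (k + tnum E7 * hdual E7) = - V (omega E7 a) k"
proof -
  have r1: "V 1 (k - 1) + V 1 (k + 1) = V 2 k" for k
  proof -
    have "{b\<in>Iset E7. adj E7 1 b} = set [2]" by (auto simp: Iset_def adj_def)
    from slE[OF sl _ this] show ?thesis by (simp add: Iset_def add.assoc)
  qed
  have r2: "V 2 (k - 1) + V 2 (k + 1) = V 1 k + (V 3 k)" for k
  proof -
    have "{b\<in>Iset E7. adj E7 2 b} = set [1,3]" by (auto simp: Iset_def adj_def)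
    from slE[OF sl _ this] show ?thesis by (simp add: Iset_def add.assoc)
  qed
  have r3: "V 3 (k - 1) + V 3 (k + 1) = V 2 k + (V 4 k + (V 7 k))" for k
  proof -
    have "{b\<in>Iset E7. adj E7 3 b} = set [2,4,7]" by (auto simp: Iset_def adj_def)
    from slE[OF sl _ this] show ?thesis by (simp add: Iset_def add.assoc)
  qed
  have r4: "V 4 (k - 1) + V 4 (k + 1) = V 3 k + (V 5 k)" for k
  proof -
    have "{b\<in>Iset E7. adj E7 4 b} = set [3,5]" by (auto simp: Iset_def adj_def)
    from slE[OF sl _ this] show ?thesis by (simp add: Iset_def add.assoc)
  qed
  have r5: "V 5 (k - 1) + V 5 (k + 1) = V 4 k + (V 6 k)" for k
  proof -
    have "{b\<in>Iset E7. adj E7 5 b} = set [4,6]" by (auto simp: Iset_def adj_def)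
    from slE[OF sl _ this] show ?thesis by (simp add: Iset_def add.assoc)
  qed
  have r6: "V 6 (k - 1) + V 6 (k + 1) = V 5 k" for k
  proof -
    have "{b\<in>Iset E7. adj E7 6 b} = set [5]" by (auto simp: Iset_def adj_def)
    from slE[OF sl _ this] show ?thesis by (simp add: Iset_def add.assoc)
  qed
  have r7: "V 7 (k - 1) + V 7 (k + 1) = V 3 k" for k
  proof -
    have "{b\<in>Iset E7. adj E7 7 b} = set [3]" by (auto simp: Iset_def adj_def)
    from slE[OF sl _ this] show ?thesis by (simp add: Iset_def add.assoc)
  qed
  have "\<forall>a\<in>{1..7}. \<forall>j. V a (j + 18) = - V (omega E7 a) j"
    by (rule AP_E7[OF r1 r2 r3 r4 r5 r6 r7])
  then show ?thesis by (simp add: Iset_def)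
qed

lemma anti_E8:
  fixes V :: "nat \<Rightarrow> int \<Rightarrow> 'g::ab_group_add"
  assumes sl: "\<forall>a\<in>Iset E8. \<forall>k. V a (k - 1) + V a (k + 1) = (\<Sum>b\<in>{b\<in>Iset E8. adj E8 a b}. V b k)"
  shows "\<forall>a\<in>Iset E8. \<forall>k. V a (k + tnum E8 * hdual E8) = - V (omega E8 a) k"
proof -
  have r1: "V 1 (k - 1) + V 1 (k + 1) = V 2 k" for k
  proof -
    have "{b\<in>Iset E8. adj E8 1 b} = set [2]" by (auto simp: Iset_def adj_def)
    from slE[OF sl _ this] show ?thesis by (simp add: Iset_def add.assoc)
  qed
  have r2: "V 2 (k - 1) + V 2 (k + 1) = V 1 k + (V 3 k)" for k
  proof -
    have "{b\<in>Iset E8. adj E8 2 b} = set [1,3]" by (auto simp: Iset_def adj_def)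
    from slE[OF sl _ this] show ?thesis by (simp add: Iset_def add.assoc)
  qed
  have r3: "V 3 (k - 1) + V 3 (k + 1) = V 2 k + (V 4 k)" for k
  proof -
    have "{b\<in>Iset E8. adj E8 3 b} = set [2,4]" by (auto simp: Iset_def adj_def)
    from slE[OF sl _ this] show ?thesis by (simp add: Iset_def add.assoc)
  qed
  have r4: "V 4 (k - 1) + V 4 (k + 1) = V 3 k + (V 5 k)" for k
  proof -
    have "{b\<in>Iset E8. adj E8 4 b} = set [3,5]" by (auto simp: Iset_def adj_def)
    from slE[OF sl _ this] show ?thesis by (simp add: Iset_def add.assoc)
  qed
  have r5: "V 5 (k - 1) + V 5 (k + 1) = V 4 k + (V 6 k + (V 8 k))" for k
  proof -
    have "{b\<in>Iset E8. adj E8 5 b} = set [4,6,8]" by (auto simp: Iset_def adj_def)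
    from slE[OF sl _ this] show ?thesis by (simp add: Iset_def add.assoc)
  qed
  have r6: "V 6 (k - 1) + V 6 (k + 1) = V 5 k + (V 7 k)" for k
  proof -
    have "{b\<in>Iset E8. adj E8 6 b} = set [5,7]" by (auto simp: Iset_def adj_def)
    from slE[OF sl _ this] show ?thesis by (simp add: Iset_def add.assoc)
  qed
  have r7: "V 7 (k - 1) + V 7 (k + 1) = V 6 k" for k
  proof -
    have "{b\<in>Iset E8. adj E8 7 b} = set [6]" by (auto simp: Iset_def adj_def)
    from slE[OF sl _ this] show ?thesis by (simp add: Iset_def add.assoc)
  qed
  have r8: "V 8 (k - 1) + V 8 (k + 1) = V 5 k" for k
  proof -
    have "{b\<in>Iset E8. adj E8 8 b} = set [5]" by (auto simp: Iset_def adj_def)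
    from slE[OF sl _ this] show ?thesis by (simp add: Iset_def add.assoc)
  qed
  have "\<forall>a\<in>{1..8}. \<forall>j. V a (j + 30) = - V (omega E8 a) j"
    by (rule AP_E8[OF r1 r2 r3 r4 r5 r6 r7 r8])
  then show ?thesis by (simp add: Iset_def)
qed

lemma T_sl: "T_sys X T \<Longrightarrow> simply_laced X \<Longrightarrow> \<forall>a\<in>Iset X. \<forall>k. T a (k - 1) + T a (k + 1) = (\<Sum>b\<in>{b\<in>Iset X. adj X a b}. T b k)"
  by (simp add: T_sys_def)
lemma Y_sl: "Y_sys X T \<Longrightarrow> simply_laced X \<Longrightarrow> \<forall>a\<in>Iset X. \<forall>k. T a (k - 1) + T a (k + 1) = (\<Sum>b\<in>{b\<in>Iset X. adj X a b}. T b k)"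
  by (simp add: Y_sys_def)

lemma anti_sl:
  fixes V :: "nat \<Rightarrow> int \<Rightarrow> 'g::ab_group_add"
  assumes v: "valid_dynkin X" and sl: "simply_laced X"
  and h: "\<forall>a\<in>Iset X. \<forall>k. V a (k - 1) + V a (k + 1) = (\<Sum>b\<in>{b\<in>Iset X. adj X a b}. V b k)"
  shows "\<forall>a\<in>Iset X. \<forall>k. V a (k + tnum X * hdual X) = - V (omega X a) k"
proof (cases X)
  case (A r)
  then show ?thesis using fam_A[of r V] v h by (simp add: Iset_def)
next
  case (D r)
  then show ?thesis using fam_D[of r V] v h by (simp add: Iset_def)
next
  case E6 then show ?thesis using anti_E6[of V] h by simp
next
  case E7 then show ?thesis using anti_E7[of V] h by simp
next
  case E8 then show ?thesis using anti_E8[of V] h by simp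
qed (use sl in auto)

lemma anti_T:
  fixes T :: "nat \<Rightarrow> int \<Rightarrow> 'g::ab_group_add"
  assumes v: "valid_dynkin X" and h: "T_sys X T"
  shows "\<forall>a\<in>Iset X. \<forall>k. T a (k + tnum X * hdual X) = - T (omega X a) k"
proof (cases "simply_laced X")
  case True show ?thesis by (rule anti_sl[OF v True T_sl[OF h True]])
next
  case False
  show ?thesis
  proof (cases X)
    case (B r)
    have hh: "\<forall>k. (\<forall>a. 1 \<le> a \<and> a \<le> r - 2 \<longrightarrow> T a (k - 2) + T a (k + 2) = z0 T (a - 1) k + T (a + 1) k)
      \<and> T (r - 1) (k - 2) + T (r - 1) (k + 2) = z0 T (r - 2) k + T r k
      \<and> T r (k - 1) + T r (k + 1) = T (r - 1) (k - 1) + T (r - 1) (k + 1)" using h B by (simp add: T_sys_def)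
    show ?thesis using fam_BT[of r T, OF _ hh] v B by (simp add: Iset_def)
  next
    case (C r)
    have hh: "\<forall>k. (\<forall>a. 1 \<le> a \<and> a \<le> r - 2 \<longrightarrow> T a (k - 1) + T a (k + 1) = z0 T (a - 1) k + T (a + 1) k)
      \<and> T (r - 1) (k - 1) + T (r - 1) (k + 1) = z0 T (r - 2) k + T r (k - 1) + T r (k + 1)
      \<and> T r (k - 2) + T r (k + 2) = T (r - 1) k" using h C by (simp add: T_sys_def)
    show ?thesis using fam_CT[of r T, OF _ hh] v C by (simp add: Iset_def)
  next
    case F4
    have hh: "\<forall>k. T 1 (k - 2) + T 1 (k + 2) = T 2 k
      \<and> T 2 (k - 2) + T 2 (k + 2) = T 1 k + T 3 k
      \<and> T 3 (k - 1) + T 3 (k + 1) = T 2 (k - 1) + T 2 (k + 1) + T 4 k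
      \<and> T 4 (k - 1) + T 4 (k + 1) = T 3 k" using h F4 by (simp add: T_sys_def)
    have "\<forall>a\<in>{1..4}. \<forall>j. T a (j + 18) = - T (omega F4 a) j"
      by (rule AP_F4T) (use hh in \<open>simp_all add: add.assoc\<close>)
    then show ?thesis using F4 by (simp add: Iset_def)
  next
    case G2
    have hh: "\<forall>k. T 1 (k - 3) + T 1 (k + 3) = T 2 k
      \<and> T 2 (k - 1) + T 2 (k + 1) = T 1 (k - 2) + T 1 k + T 1 (k + 2)" using h G2 by (simp add: T_sys_def)
    have "\<forall>a\<in>{1..2}. \<forall>j. T a (j + 12) = - T (omega G2 a) j"
      by (rule AP_G2T) (use hh in \<open>simp_all add: add.assoc\<close>)
    then show ?thesis using G2 by (simp add: Iset_def)
  qed (use False in auto)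
qed

lemma anti_Y:
  fixes T :: "nat \<Rightarrow> int \<Rightarrow> 'g::ab_group_add"
  assumes v: "valid_dynkin X" and h: "Y_sys X T"
  shows "\<forall>a\<in>Iset X. \<forall>k. T a (k + tnum X * hdual X) = - T (omega X a) k"
proof (cases "simply_laced X")
  case True show ?thesis by (rule anti_sl[OF v True Y_sl[OF h True]])
next
  case False
  show ?thesis
  proof (cases X)
    case (B r)
    have hh: "\<forall>k. (\<forall>a. 1 \<le> a \<and> a \<le> r - 2 \<longrightarrow> T a (k - 2) + T a (k + 2) = z0 T (a - 1) k + T (a + 1) k)
      \<and> T (r - 1) (k - 2) + T (r - 1) (k + 2) = z0 T (r - 2) k + T r (k - 1) + T r (k + 1)
      \<and> T r (k - 1) + T r (k + 1) = T (r - 1) k" using h B by (simp add: Y_sys_def)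
    show ?thesis using fam_BY[of r T, OF _ hh] v B by (simp add: Iset_def)
  next
    case (C r)
    have hh: "\<forall>k. (\<forall>a. 1 \<le> a \<and> a \<le> r - 2 \<longrightarrow> T a (k - 1) + T a (k + 1) = z0 T (a - 1) k + T (a + 1) k)
      \<and> T (r - 1) (k - 1) + T (r - 1) (k + 1) = z0 T (r - 2) k + T r k
      \<and> T r (k - 2) + T r (k + 2) = T (r - 1) (k - 1) + T (r - 1) (k + 1)" using h C by (simp add: Y_sys_def)
    show ?thesis using fam_CY[of r T, OF _ hh] v C by (simp add: Iset_def)
  next
    case F4
    have hh: "\<forall>k. T 1 (k - 2) + T 1 (k + 2) = T 2 k
      \<and> T 2 (k - 2) + T 2 (k + 2) = T 1 k + T 3 (k - 1) + T 3 (k + 1)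
      \<and> T 3 (k - 1) + T 3 (k + 1) = T 2 k + T 4 k
      \<and> T 4 (k - 1) + T 4 (k + 1) = T 3 k" using h F4 by (simp add: Y_sys_def)
    have "\<forall>a\<in>{1..4}. \<forall>j. T a (j + 18) = - T (omega F4 a) j"
      by (rule AP_F4Y) (use hh in \<open>simp_all add: add.assoc\<close>)
    then show ?thesis using F4 by (simp add: Iset_def)
  next
    case G2
    have hh: "\<forall>k. T 1 (k - 3) + T 1 (k + 3) = T 2 (k - 2) + T 2 k + T 2 (k + 2)
      \<and> T 2 (k - 1) + T 2 (k + 1) = T 1 k" using h G2 by (simp add: Y_sys_def)
    have "\<forall>a\<in>{1..2}. \<forall>j. T a (j + 12) = - T (omega G2 a) j"
      by (rule AP_G2Y) (use hh in \<open>simp_all add: add.assoc\<close>)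
    then show ?thesis using G2 by (simp add: Iset_def)
  qed (use False in auto)
qed

lemma omega_ok:
  assumes v: "valid_dynkin X" and a: "a \<in> Iset X"
  shows "omega X a \<in> Iset X \<and> omega X (omega X a) = a"
  using v a by (cases X) (auto simp: Iset_def)

lemma period:
  fixes V :: "nat \<Rightarrow> int \<Rightarrow> 'g::ab_group_add"
  assumes v: "valid_dynkin X" and anti: "\<forall>a\<in>Iset X. \<forall>k. V a (k + t * h) = - V (omega X a) k"
  shows "\<forall>a\<in>Iset X. \<forall>k. V a (k + t * h) = - V (omega X a) k \<and> V a (k + 2 * t * h) = V a k"
proof (intro ballI allI conjI)
  fix a k assume a: "a \<in> Iset X"
  show "V a (k + t * h) = - V (omega X a) k" using anti a by blast
  have o: "omega X a \<in> Iset X" "omega X (omega X a) = a" using omega_ok[OF v a] by auto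
  have e: "k + 2 * t * h = (k + t * h) + t * h" by (simp add: algebra_simps)
  have "V a (k + 2 * t * h) = - V (omega X a) (k + t * h)" unfolding e using anti a by blast
  also have "\<dots> = - (- V (omega X (omega X a)) k)" using anti o(1) by simp
  also have "\<dots> = V a k" using o(2) by simp
  finally show "V a (k + 2 * t * h) = V a k" .
qed

theorem theorem8p8:
  fixes X :: dynkin
  assumes "valid_dynkin X"
  shows "(\<forall>T :: nat \<Rightarrow> int \<Rightarrow> 'g::ab_group_add. T_sys X T \<longrightarrow>
            (\<forall>a\<in>Iset X. \<forall>k.
               T a (k + tnum X * hdual X) = - T (omega X a) k
             \<and> T a (k + 2 * tnum X * hdual X) = T a k))
       \<and> (\<forall>Y :: nat \<Rightarrow> int \<Rightarrow> 'h::ab_group_add. Y_sys X Y \<longrightarrow>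
            (\<forall>a\<in>Iset X. \<forall>k.
               Y a (k + tnum X * hdual X) = - Y (omega X a) k
             \<and> Y a (k + 2 * tnum X * hdual X) = Y a k))"
proof (intro conjI allI impI)
  fix T :: "nat \<Rightarrow> int \<Rightarrow> 'g::ab_group_add" assume "T_sys X T"
  from period[OF assms anti_T[OF assms this]]
  show "\<forall>a\<in>Iset X. \<forall>k. T a (k + tnum X * hdual X) = - T (omega X a) k \<and> T a (k + 2 * tnum X * hdual X) = T a k" .
next
  fix Y :: "nat \<Rightarrow> int \<Rightarrow> 'h::ab_group_add" assume "Y_sys X Y"
  from period[OF assms anti_Y[OF assms this]]
  show "\<forall>a\<in>Iset X. \<forall>k. Y a (k + tnum X * hdual X) = - Y (omega X a) k \<and> Y a (k + 2 * tnum X * hdual X) = Y a k" .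
qed

end
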